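(* Let $\alpha\in(0,1]$ and let $n$ be such that $n^\alpha=2^q$ for a positive integer $q$. Let $G_m$ be a planar 3-tree with $m\in\mathbb{N}$ vertices, given with a combinatorial (plane) embedding whose outer face has vertices $u,v,z$. Let $p_1,p_2,p_3\in B_n$ be points such that one of them has strictly largest $y$-coordinate, and let $R\subseteq\Box(\Delta(p_1,p_2,p_3))$ be an open axis-aligned rectangle with $w(R)h(R)>8m^2n^\alpha$, $w(R)>2m$ and $h(R)>m$. Then $G_m$ admits a planar straight-line embedding in which $u,v,z$ are mapped to $\tau(p_1),\tau(p_2),\tau(p_3)$, respectively, and every interior vertex of $G_m$ is mapped to a point $\tau(p)$ with $p\in B_n\cap R$.
   Context: A planar 3-tree is obtained from a triangle by repeatedly inserting a new vertex into a triangular face and joining it to the three vertices of that face. Let $A_n=\{(i,j)\in\mathbb{Z}^2: 0\le i,j\le 14n\}$. The sparse grid $B_n\subseteq A_n$ is the set of points of $A_n$ of at least one of the following forms: (1) $(i,j)$ with $n^\alpha \mid ij$; (2) $(i+k,j+k)$ with $n^\alpha\mid i$, $n^\alpha\mid j$, $k\in\{1,\dots,n^\alpha\}$; (3) $(i+k,j-k)$ with $n^\alpha\mid i$, $n^\alpha\mid j$, $k\in\{1,\dots,n^\alpha\}$. Let $\tau:\mathbb{R}^2\to\mathbb{R}^2$, $\tau(x,y)=(x,(28n)^y)$. For three points of $A_n$, relabel them (if necessary) as $(a_1,b_1),(a_2,b_2),(a_3,b_3)$ so that $\max(b_1,b_2)<b_3$, and define the open rectangle $\Box(\Delta)=(\min(a_1,a_2),\max(a_1,a_2))\times(\max(b_1,b_2),b_3)$.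 For an open rectangle $R=(x_1,x_2)\times(y_1,y_2)$, $w(R)=x_2-x_1$ and $h(R)=y_2-y_1$. A planar straight-line embedding maps vertices to distinct points and edges to pairwise non-crossing straight segments. *)

theory Defs
  imports "HOL-Analysis.Analysis"
begin

text \<open>Planar 3-trees together with their combinatorial embedding:
  vertex set V, edge set E (2-element sets), and set F of inner (triangular)
  faces (3-element sets). The outer face is the triangle u, v, z.\<close>
inductive planar3tree :: "'a \<Rightarrow> 'a \<Rightarrow> 'a \<Rightarrow> 'a set \<Rightarrow> 'a set set \<Rightarrow> 'a set set \<Rightarrow> bool"
  for u v z where
  base: "distinct [u, v, z] \<Longrightarrow>
     planar3tree u v z {u, v, z} {{u, v}, {v, z}, {u, z}} {{u, v, z}}"
| step: "planar3tree u v z V E F \<Longrightarrow> {a, b, c} \<in> F \<Longrightarrow> x \<notin> V \<Longrightarrow>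
     planar3tree u v z (insert x V) (E \<union> {{x, a}, {x, b}, {x, c}})
        ((F - {{a, b, c}}) \<union> {{x, a, b}, {x, b, c}, {x, a, c}})"

definition straight_line_embedding :: "'a set \<Rightarrow> 'a set set \<Rightarrow> ('a \<Rightarrow> real \<times> real) \<Rightarrow> bool" where
  "straight_line_embedding V E f \<longleftrightarrow>
     inj_on f V \<and>
     (\<forall>e\<in>E. \<forall>e'\<in>E. e \<noteq> e' \<longrightarrow>
        convex hull (f ` e) \<inter> convex hull (f ` e') \<subseteq> f ` (e \<inter> e'))"

definition gridA :: "nat \<Rightarrow> (int \<times> int) set" where
  "gridA n = {(i, j). 0 \<le> i \<and> i \<le> 14 * int n \<and> 0 \<le> j \<and> j \<le> 14 * int n}"

text \<open>Sparse grid; the parameter d stands for n^alpha (assumed to be an integer).\<close>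
definition sparse_grid :: "nat \<Rightarrow> int \<Rightarrow> (int \<times> int) set" where
  "sparse_grid n d = gridA n \<inter>
     ({(i, j). d dvd i * j}
      \<union> {(i + k, j + k) | i j k. d dvd i \<and> d dvd j \<and> 1 \<le> k \<and> k \<le> d}
      \<union> {(i + k, j - k) | i j k. d dvd i \<and> d dvd j \<and> 1 \<le> k \<and> k \<le> d})"

definition tau :: "nat \<Rightarrow> real \<times> real \<Rightarrow> real \<times> real" where
  "tau n p = (fst p, (28 * real n) powr (snd p))"

definition rpt :: "int \<times> int \<Rightarrow> real \<times> real" where
  "rpt p = (real_of_int (fst p), real_of_int (snd p))"

definition open_rect :: "real \<Rightarrow> real \<Rightarrow> real \<Rightarrow> real \<Rightarrow> (real \<times> real) set" where
  "open_rect x1 x2 y1 y2 = {(x, y). x1 < x \<and> x < x2 \<and> y1 < y \<and> y < y2}"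

text \<open>Box for points labelled so that the third one is strictly highest.\<close>
definition box_top :: "int \<times> int \<Rightarrow> int \<times> int \<Rightarrow> int \<times> int \<Rightarrow> (real \<times> real) set" where
  "box_top p q r = open_rect (real_of_int (min (fst p) (fst q))) (real_of_int (max (fst p) (fst q)))
                             (real_of_int (max (snd p) (snd q))) (real_of_int (snd r))"

definition Box :: "int \<times> int \<Rightarrow> int \<times> int \<Rightarrow> int \<times> int \<Rightarrow> (real \<times> real) set" where
  "Box p1 p2 p3 =
     (if max (snd p1) (snd p2) < snd p3 then box_top p1 p2 p3
      else if max (snd p1) (snd p3) < snd p2 then box_top p1 p3 p2
      else box_top p2 p3 p1)"

end

theory Submission
  imports Defs
begin

definition DD :: "real\<times>real \<Rightarrow> real\<times>real \<Rightarrow> real\<times>real \<Rightarrow> real" where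
 "DD A B C = (fst B - fst A) * (snd C - snd A) - (snd B - snd A) * (fst C - fst A)"

definition T3 :: "real\<times>real \<Rightarrow> real\<times>real \<Rightarrow> real\<times>real \<Rightarrow> (real\<times>real) set" where
 "T3 A B C = {\<alpha> *\<^sub>R A + \<beta> *\<^sub>R B + \<gamma> *\<^sub>R C | \<alpha> \<beta> \<gamma>. 0<\<alpha> \<and> 0<\<beta> \<and> 0<\<gamma> \<and> \<alpha>+\<beta>+\<gamma>=1}"

lemma T3_sub1: "T3 A B C \<subseteq> T3 B A C"
proof
  fix p assume "p \<in> T3 A B C"
  then obtain a b c where h: "0<a" "0<b" "0<c" "a+b+c=1" "p = a *\<^sub>R A + b *\<^sub>R B + c *\<^sub>R C"
    unfolding T3_def by blast
  have "p = b *\<^sub>R B + a *\<^sub>R A + c *\<^sub>R C" "b+a+c=1" using h by (simp_all add: algebra_simps)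
  then show "p \<in> T3 B A C" unfolding T3_def using h by blast
qed

lemma T3_sub2: "T3 A B C \<subseteq> T3 A C B"
proof
  fix p assume "p \<in> T3 A B C"
  then obtain a b c where h: "0<a" "0<b" "0<c" "a+b+c=1" "p = a *\<^sub>R A + b *\<^sub>R B + c *\<^sub>R C"
    unfolding T3_def by blast
  have "p = a *\<^sub>R A + c *\<^sub>R C + b *\<^sub>R B" "a+c+b=1" using h by (simp_all add: algebra_simps)
  then show "p \<in> T3 A C B" unfolding T3_def using h by blast
qed

lemma T3_sym1: "T3 A B C = T3 B A C" using T3_sub1 by blast
lemma T3_sym2: "T3 A B C = T3 A C B" using T3_sub2 by blast

lemma DD_sym1: "DD B A C = - DD A B C" unfolding DD_def by algebra
lemma DD_sym2: "DD A C B = - DD A B C" unfolding DD_def by algebra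

lemma DD_comb1: "a+b+c=1 \<Longrightarrow> DD (a *\<^sub>R A + b *\<^sub>R B + c *\<^sub>R C) B C = a * DD A B C"
proof -
  assume h: "a+b+c=1"
  hence c: "c = 1 - a - b" by simp
  show ?thesis unfolding DD_def c by (simp add: algebra_simps)
qed

lemma DD_comb2: "a+b+c=1 \<Longrightarrow> DD A (a *\<^sub>R A + b *\<^sub>R B + c *\<^sub>R C) C = b * DD A B C"
proof -
  assume h: "a+b+c=1"
  hence c: "c = 1 - a - b" by simp
  show ?thesis unfolding DD_def c by (simp add: algebra_simps)
qed

lemma DD_comb3: "a+b+c=1 \<Longrightarrow> DD A B (a *\<^sub>R A + b *\<^sub>R B + c *\<^sub>R C) = c * DD A B C"
proof -
  assume h: "a+b+c=1"
  hence c: "c = 1 - a - b" by simp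
  show ?thesis unfolding DD_def c by (simp add: algebra_simps)
qed

lemma uniq:
  assumes "DD A B C \<noteq> 0" "a1+a2+a3=1" "b1+b2+b3=1"
   "a1 *\<^sub>R A + a2 *\<^sub>R B + a3 *\<^sub>R C = b1 *\<^sub>R A + b2 *\<^sub>R B + b3 *\<^sub>R C"
  shows "a1=b1 \<and> a2=b2 \<and> a3=b3"
  using DD_comb1[OF assms(2), of A B C] DD_comb1[OF assms(3), of A B C]
   DD_comb2[OF assms(2), of A B C] DD_comb2[OF assms(3), of A B C]
   DD_comb3[OF assms(2), of A B C] DD_comb3[OF assms(3), of A B C] assms(1,4)
  by auto

lemma T3_mem: "0<a \<Longrightarrow> 0<b \<Longrightarrow> 0<c \<Longrightarrow> a+b+c=1 \<Longrightarrow> a *\<^sub>R A + b *\<^sub>R B + c *\<^sub>R C \<in> T3 A B C"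
  unfolding T3_def by blast

lemma G1:
  assumes "0<\<alpha>" "0<\<beta>" "0<\<gamma>" "\<alpha>+\<beta>+\<gamma>=1" "X = \<alpha> *\<^sub>R A + \<beta> *\<^sub>R B + \<gamma> *\<^sub>R C"
  shows "closed_segment X A \<subseteq> T3 A B C \<union> {A}"
proof
  fix p assume "p \<in> closed_segment X A"
  then obtain u where u: "0 \<le> u" "u \<le> 1" "p = (1-u) *\<^sub>R X + u *\<^sub>R A" unfolding closed_segment_def by auto
  have e: "p = ((1-u)*\<alpha>+u) *\<^sub>R A + ((1-u)*\<beta>) *\<^sub>R B + ((1-u)*\<gamma>) *\<^sub>R C"
    using u(3) assms(5) by (simp add: algebra_simps)
  show "p \<in> T3 A B C \<union> {A}"
  proof (cases "u = 1")
    case True then show ?thesis using u by simp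
  next
    case False
    hence "0 < 1-u" using u by simp
    have p0: "0 < (1-u)*\<alpha>" "0 < (1-u)*\<beta>" "0 < (1-u)*\<gamma>" using \<open>0<1-u\<close> assms by auto
    have p1: "0 < (1-u)*\<alpha>+u" "0 < (1-u)*\<beta>" "0 < (1-u)*\<gamma>" using p0 u by auto
    have p2: "((1-u)*\<alpha>+u) + (1-u)*\<beta> + (1-u)*\<gamma> = 1"
    proof -
      have "((1-u)*\<alpha>+u) + (1-u)*\<beta> + (1-u)*\<gamma> = (1-u)*(\<alpha>+\<beta>+\<gamma>) + u" by (simp add: algebra_simps)
      then show ?thesis using assms(4) by simp
    qed
    have "p \<in> T3 A B C" unfolding e using T3_mem[OF p1 p2] .
    then show ?thesis by simp
  qed
qed

lemma G2:
  assumes "0<\<alpha>" "0<\<beta>" "0<\<gamma>" "\<alpha>+\<beta>+\<gamma>=1" "X = \<alpha> *\<^sub>R A + \<beta> *\<^sub>R B + \<gamma> *\<^sub>R C"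
  shows "T3 X A B \<subseteq> T3 A B C"
proof
  fix p assume "p \<in> T3 X A B"
  then obtain m n r where m: "0<m" "0<n" "0<r" "m+n+r=1" "p = m *\<^sub>R X + n *\<^sub>R A + r *\<^sub>R B"
    unfolding T3_def by auto
  have e: "p = (m*\<alpha>+n) *\<^sub>R A + (m*\<beta>+r) *\<^sub>R B + (m*\<gamma>) *\<^sub>R C"
    using m(5) assms(5) by (simp add: algebra_simps)
  have s: "(m*\<alpha>+n) + (m*\<beta>+r) + (m*\<gamma>) = 1"
  proof -
    have "(m*\<alpha>+n) + (m*\<beta>+r) + (m*\<gamma>) = m*(\<alpha>+\<beta>+\<gamma>) + n + r" by (simp add: algebra_simps)
    then show ?thesis using assms(4) m(4) by simp
  qed
  show "p \<in> T3 A B C" unfolding e using assms m s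
    by (intro T3_mem) (auto intro: add_pos_pos)
qed

lemma G3:
  assumes "DD A B C \<noteq> 0" "0<\<alpha>" "0<\<beta>" "0<\<gamma>" "\<alpha>+\<beta>+\<gamma>=1" "X = \<alpha> *\<^sub>R A + \<beta> *\<^sub>R B + \<gamma> *\<^sub>R C"
  shows "closed_segment X A \<inter> closed_segment X B \<subseteq> {X}"
proof
  fix p assume "p \<in> closed_segment X A \<inter> closed_segment X B"
  then obtain s t where st: "0 \<le> s" "s \<le> 1" "p = (1-s) *\<^sub>R X + s *\<^sub>R A"
     "0 \<le> t" "t \<le> 1" "p = (1-t) *\<^sub>R X + t *\<^sub>R B" unfolding closed_segment_def by auto
  have e1: "p = ((1-s)*\<alpha>+s) *\<^sub>R A + ((1-s)*\<beta>) *\<^sub>R B + ((1-s)*\<gamma>) *\<^sub>R C"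
    using st(3) assms(6) by (simp add: algebra_simps)
  have e2: "p = ((1-t)*\<alpha>) *\<^sub>R A + ((1-t)*\<beta>+t) *\<^sub>R B + ((1-t)*\<gamma>) *\<^sub>R C"
    using st(6) assms(6) by (simp add: algebra_simps)
  have s1: "((1-s)*\<alpha>+s) + ((1-s)*\<beta>) + ((1-s)*\<gamma>) = 1"
  proof -
    have "((1-s)*\<alpha>+s) + ((1-s)*\<beta>) + ((1-s)*\<gamma>) = (1-s)*(\<alpha>+\<beta>+\<gamma>) + s" by (simp add: algebra_simps)
    then show ?thesis using assms(5) by simp
  qed
  have s2: "((1-t)*\<alpha>) + ((1-t)*\<beta>+t) + ((1-t)*\<gamma>) = 1"
  proof -
    have "((1-t)*\<alpha>) + ((1-t)*\<beta>+t) + ((1-t)*\<gamma>) = (1-t)*(\<alpha>+\<beta>+\<gamma>) + t" by (simp add: algebra_simps)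
    then show ?thesis using assms(5) by simp
  qed
  from uniq[OF assms(1) s1 s2] e1 e2 have "(1-s)*\<alpha>+s = (1-t)*\<alpha>" "(1-s)*\<gamma> = (1-t)*\<gamma>" by auto
  with assms have "s = 0" by (smt (verit) mult_right_cancel)
  then show "p \<in> {X}" using st by simp
qed

lemma G4a:
  assumes "DD A B C \<noteq> 0" "0<\<alpha>" "0<\<beta>" "0<\<gamma>" "\<alpha>+\<beta>+\<gamma>=1" "X = \<alpha> *\<^sub>R A + \<beta> *\<^sub>R B + \<gamma> *\<^sub>R C"
  shows "T3 X A B \<inter> closed_segment X C = {}"
proof (rule ccontr)
  assume "T3 X A B \<inter> closed_segment X C \<noteq> {}"
  then obtain p where "p \<in> T3 X A B" "p \<in> closed_segment X C" by auto
  then obtain m n r s where m: "0<m" "0<n" "0<r" "m+n+r=1" "p = m *\<^sub>R X + n *\<^sub>R A + r *\<^sub>R B"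
     "0 \<le> s" "s \<le> 1" "p = (1-s) *\<^sub>R X + s *\<^sub>R C"
    unfolding T3_def closed_segment_def by auto
  have e1: "p = (m*\<alpha>+n) *\<^sub>R A + (m*\<beta>+r) *\<^sub>R B + (m*\<gamma>) *\<^sub>R C"
    using m(5) assms(6) by (simp add: algebra_simps)
  have e2: "p = ((1-s)*\<alpha>) *\<^sub>R A + ((1-s)*\<beta>) *\<^sub>R B + ((1-s)*\<gamma>+s) *\<^sub>R C"
    using m(8) assms(6) by (simp add: algebra_simps)
  have s1: "(m*\<alpha>+n) + (m*\<beta>+r) + (m*\<gamma>) = 1"
  proof -
    have "(m*\<alpha>+n) + (m*\<beta>+r) + (m*\<gamma>) = m*(\<alpha>+\<beta>+\<gamma>) + n + r" by (simp add: algebra_simps)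
    then show ?thesis using assms(5) m(4) by simp
  qed
  have s2: "((1-s)*\<alpha>) + ((1-s)*\<beta>) + ((1-s)*\<gamma>+s) = 1"
  proof -
    have "((1-s)*\<alpha>) + ((1-s)*\<beta>) + ((1-s)*\<gamma>+s) = (1-s)*(\<alpha>+\<beta>+\<gamma>) + s" by (simp add: algebra_simps)
    then show ?thesis using assms(5) by simp
  qed
  from uniq[OF assms(1) s1 s2] e1 e2 have h: "m*\<alpha>+n = (1-s)*\<alpha>" "m*\<gamma> = (1-s)*\<gamma>+s" by auto
  from h(2) have "(m - (1-s))*\<gamma> = s" by (simp add: algebra_simps)
  with m(6) assms(4) have "m \<ge> 1-s" using zero_le_mult_iff[of "m-(1-s)" \<gamma>] by linarith
  hence "(1-s)*\<alpha> \<le> m*\<alpha>" using assms(2) by (intro mult_right_mono) auto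
  with h(1) m(2) show False by linarith
qed

lemma G4b:
  assumes "DD A B C \<noteq> 0" "0<\<alpha>" "0<\<beta>" "0<\<gamma>" "\<alpha>+\<beta>+\<gamma>=1" "X = \<alpha> *\<^sub>R A + \<beta> *\<^sub>R B + \<gamma> *\<^sub>R C"
  shows "T3 X A B \<inter> closed_segment X A = {}"
proof (rule ccontr)
  assume "T3 X A B \<inter> closed_segment X A \<noteq> {}"
  then obtain p where "p \<in> T3 X A B" "p \<in> closed_segment X A" by auto
  then obtain m n r s where m: "0<m" "0<n" "0<r" "m+n+r=1" "p = m *\<^sub>R X + n *\<^sub>R A + r *\<^sub>R B"
     "0 \<le> s" "s \<le> 1" "p = (1-s) *\<^sub>R X + s *\<^sub>R A"
    unfolding T3_def closed_segment_def by auto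
  have e1: "p = (m*\<alpha>+n) *\<^sub>R A + (m*\<beta>+r) *\<^sub>R B + (m*\<gamma>) *\<^sub>R C"
    using m(5) assms(6) by (simp add: algebra_simps)
  have e2: "p = ((1-s)*\<alpha>+s) *\<^sub>R A + ((1-s)*\<beta>) *\<^sub>R B + ((1-s)*\<gamma>) *\<^sub>R C"
    using m(8) assms(6) by (simp add: algebra_simps)
  have s1: "(m*\<alpha>+n) + (m*\<beta>+r) + (m*\<gamma>) = 1"
  proof -
    have "(m*\<alpha>+n) + (m*\<beta>+r) + (m*\<gamma>) = m*(\<alpha>+\<beta>+\<gamma>) + n + r" by (simp add: algebra_simps)
    then show ?thesis using assms(5) m(4) by simp
  qed
  have s2: "((1-s)*\<alpha>+s) + ((1-s)*\<beta>) + ((1-s)*\<gamma>) = 1"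
  proof -
    have "((1-s)*\<alpha>+s) + ((1-s)*\<beta>) + ((1-s)*\<gamma>) = (1-s)*(\<alpha>+\<beta>+\<gamma>) + s" by (simp add: algebra_simps)
    then show ?thesis using assms(5) by simp
  qed
  from uniq[OF assms(1) s1 s2] e1 e2 have h: "m*\<beta>+r = (1-s)*\<beta>" "m*\<gamma> = (1-s)*\<gamma>" by auto
  from h(2) assms(4) have "m = 1-s" by simp
  with h(1) m(3) show False by simp
qed

lemma G5:
  assumes "DD A B C \<noteq> 0" "0<\<alpha>" "0<\<beta>" "0<\<gamma>" "\<alpha>+\<beta>+\<gamma>=1" "X = \<alpha> *\<^sub>R A + \<beta> *\<^sub>R B + \<gamma> *\<^sub>R C"
  shows "T3 X A B \<inter> T3 X B C = {}"
proof (rule ccontr)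
  assume "T3 X A B \<inter> T3 X B C \<noteq> {}"
  then obtain p where "p \<in> T3 X A B" "p \<in> T3 X B C" by auto
  then obtain m n r m' r' t where m: "0<m" "0<n" "0<r" "m+n+r=1" "p = m *\<^sub>R X + n *\<^sub>R A + r *\<^sub>R B"
     "0<m'" "0<r'" "0<t" "m'+r'+t=1" "p = m' *\<^sub>R X + r' *\<^sub>R B + t *\<^sub>R C"
    unfolding T3_def by auto
  have e1: "p = (m*\<alpha>+n) *\<^sub>R A + (m*\<beta>+r) *\<^sub>R B + (m*\<gamma>) *\<^sub>R C"
    using m(5) assms(6) by (simp add: algebra_simps)
  have e2: "p = (m'*\<alpha>) *\<^sub>R A + (m'*\<beta>+r') *\<^sub>R B + (m'*\<gamma>+t) *\<^sub>R C"
    using m(10) assms(6) by (simp add: algebra_simps)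
  have s1: "(m*\<alpha>+n) + (m*\<beta>+r) + (m*\<gamma>) = 1"
  proof -
    have "(m*\<alpha>+n) + (m*\<beta>+r) + (m*\<gamma>) = m*(\<alpha>+\<beta>+\<gamma>) + n + r" by (simp add: algebra_simps)
    then show ?thesis using assms(5) m(4) by simp
  qed
  have s2: "(m'*\<alpha>) + (m'*\<beta>+r') + (m'*\<gamma>+t) = 1"
  proof -
    have "(m'*\<alpha>) + (m'*\<beta>+r') + (m'*\<gamma>+t) = m'*(\<alpha>+\<beta>+\<gamma>) + r' + t" by (simp add: algebra_simps)
    then show ?thesis using assms(5) m(9) by simp
  qed
  from uniq[OF assms(1) s1 s2] e1 e2 have h: "m*\<alpha>+n = m'*\<alpha>" "m*\<gamma> = m'*\<gamma>+t" by auto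
  from h(1) m(2) assms(2) have "m < m'" by (smt (verit) mult_right_mono)
  with h(2) m(8) assms(4) show False by (smt (verit) mult_right_mono)
qed

lemma B1:
  assumes "DD A B C \<noteq> 0"
  shows "closed_segment A B \<inter> T3 A B C = {}"
proof (rule ccontr)
  assume "closed_segment A B \<inter> T3 A B C \<noteq> {}"
  then obtain p where "p \<in> T3 A B C" "p \<in> closed_segment A B" by auto
  then obtain a b c s where m: "0<a" "0<b" "0<c" "a+b+c=1" "p = a *\<^sub>R A + b *\<^sub>R B + c *\<^sub>R C"
     "0 \<le> s" "s \<le> 1" "p = (1-s) *\<^sub>R A + s *\<^sub>R B"
    unfolding T3_def closed_segment_def by auto
  have e2: "p = (1-s) *\<^sub>R A + s *\<^sub>R B + 0 *\<^sub>R C" using m(8) by simp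
  have "(1-s) + s + 0 = (1::real)" by simp
  from uniq[OF assms m(4) this] m(5) e2 have "c = 0" by auto
  with m(3) show False by simp
qed

lemma B2:
  assumes "DD A B C \<noteq> 0"
  shows "closed_segment A B \<inter> closed_segment B C \<subseteq> {B}"
proof
  fix p assume "p \<in> closed_segment A B \<inter> closed_segment B C"
  then obtain s t where st: "0 \<le> s" "s \<le> 1" "p = (1-s) *\<^sub>R A + s *\<^sub>R B"
     "0 \<le> t" "t \<le> 1" "p = (1-t) *\<^sub>R B + t *\<^sub>R C" unfolding closed_segment_def by auto
  have e1: "p = (1-s) *\<^sub>R A + s *\<^sub>R B + 0 *\<^sub>R C" using st(3) by simp
  have e2: "p = 0 *\<^sub>R A + (1-t) *\<^sub>R B + t *\<^sub>R C" using st(6) by simp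
  have s1: "(1-s) + s + 0 = (1::real)" by simp
  have s2: "0 + (1-t) + t = (1::real)" by simp
  from uniq[OF assms s1 s2] e1 e2 have "t = 0" by auto
  then show "p \<in> {B}" using st by simp
qed

lemma DD_distinct: "DD A B C \<noteq> 0 \<Longrightarrow> A \<noteq> B \<and> B \<noteq> C \<and> A \<noteq> C"
  unfolding DD_def by auto

lemma DD_sum: "DD P B C + DD A P C + DD A B P = DD A B C"
  unfolding DD_def by algebra

lemma DD_vec: "DD P B C *\<^sub>R A + DD A P C *\<^sub>R B + DD A B P *\<^sub>R C = DD A B C *\<^sub>R P"
  unfolding DD_def by (simp add: prod_eq_iff) (intro conjI; algebra)

lemma T3_by_DD:
  assumes "DD A B C > 0" "DD P B C > 0" "DD A P C > 0" "DD A B P > 0"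
  shows "P \<in> T3 A B C"
proof -
  let ?D = "DD A B C"
  have "P = (DD P B C / ?D) *\<^sub>R A + (DD A P C / ?D) *\<^sub>R B + (DD A B P / ?D) *\<^sub>R C"
  proof -
    have "(DD P B C / ?D) *\<^sub>R A + (DD A P C / ?D) *\<^sub>R B + (DD A B P / ?D) *\<^sub>R C
        = (1/?D) *\<^sub>R (DD P B C *\<^sub>R A + DD A P C *\<^sub>R B + DD A B P *\<^sub>R C)"
      by (simp add: scaleR_add_right)
    also have "\<dots> = P" unfolding DD_vec using assms(1) by simp
    finally show ?thesis by simp
  qed
  moreover have "DD P B C / ?D + DD A P C / ?D + DD A B P / ?D = 1"
    using DD_sum[of P B C A] assms(1) by (simp add: add_divide_distrib[symmetric])
  ultimately show ?thesis using assms by (metis T3_mem divide_pos_pos)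
qed

lemma tau_rpt: "tau n (rpt p) = (real_of_int (fst p), (28 * real n) powr real_of_int (snd p))"
  by (simp add: tau_def rpt_def)

lemma powr_step:
  fixes N :: real and a b :: int
  assumes "N \<ge> 1" "a < b"
  shows "N powr b \<ge> N * N powr a"
proof -
  have "N * N powr a = N powr (a + 1)" using assms(1) by (simp add: powr_add)
  also have "\<dots> \<le> N powr b" using assms by (intro powr_mono) auto
  finally show ?thesis .
qed

lemma good_DD:
  fixes l1 r1 c1 ly ry cy :: int
  assumes n: "n \<ge> 1" and "l1 < r1" "ly < cy" "ry < cy"
    and b: "0 \<le> l1" "r1 \<le> 14 * int n" "0 \<le> c1" "c1 \<le> 14 * int n"
  shows "DD (tau n (rpt (l1,ly))) (tau n (rpt (r1,ry))) (tau n (rpt (c1,cy))) > 0"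
proof -
  define N :: real where "N = 28 * real n"
  have N1: "N \<ge> 1" using n unfolding N_def by simp
  define Ly where "Ly = N powr ly"
  define Ry where "Ry = N powr ry"
  define Cy where "Cy = N powr cy"
  define M where "M = max Ly Ry"
  have pos: "Ly > 0" "Ry > 0" using N1 unfolding Ly_def Ry_def by auto
  have M0: "M > 0" "Ly \<le> M" "Ry \<le> M" using pos unfolding M_def by auto
  have CM: "Cy \<ge> N * M" unfolding M_def Cy_def Ly_def Ry_def
    using powr_step[OF N1 assms(3)] powr_step[OF N1 assms(4)] by (simp add: max_def)
  have d1: "real_of_int r1 - real_of_int l1 \<ge> 1" using assms(2) by linarith
  have c1b: "\<bar>real_of_int c1 - real_of_int l1\<bar> \<le> 14 * real n" using b assms(2) by linarith
  have ryly: "\<bar>Ry - Ly\<bar> \<le> M" using M0 pos by linarith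
  have "Cy - Ly \<ge> 0" using CM M0 N1
    by (smt (verit) mult_le_cancel_right1)
  hence t1: "(real_of_int r1 - real_of_int l1) * (Cy - Ly) \<ge> Cy - Ly"
    using d1 by (metis mult_le_cancel_right1 mult.commute order_refl mult_right_mono mult_1)
  have "\<bar>(Ry - Ly) * (real_of_int c1 - real_of_int l1)\<bar> \<le> M * (14 * real n)"
    unfolding abs_mult using ryly c1b by (intro mult_mono) auto
  hence t2: "(Ry - Ly) * (real_of_int c1 - real_of_int l1) \<le> M * (14 * real n)" by linarith
  have q1: "N*M - M - M*(14 * real n) = M * (14 * real n - 1)" unfolding N_def by (simp add: algebra_simps)
  have q2: "M * (14 * real n - 1) > 0" using M0 n by simp
  have "Cy - Ly - M * (14 * real n) > 0" using CM M0 q1 q2 by linarith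
  with t1 t2 have "(real_of_int r1 - real_of_int l1) * (Cy - Ly) - (Ry - Ly) * (real_of_int c1 - real_of_int l1) > 0"
    by linarith
  then show ?thesis unfolding DD_def tau_rpt Ly_def Ry_def Cy_def N_def by simp
qed

lemma card3_distinct: "card {a,b,c} = 3 \<Longrightarrow> distinct [a,b,c]"
  by (auto simp: card_insert_if split: if_splits)

lemma newfaces_eq: "distinct [a,b,c] \<Longrightarrow>
  {{x,a,b},{x,b,c},{x,a,c}} = (\<lambda>y. insert x ({a,b,c} - {y})) ` {a,b,c}"
  by (auto simp: insert_commute)

lemma newedges_eq: "{{x,a},{x,b},{x,c}} = (\<lambda>y. {x,y}) ` {a,b,c}"
  by auto

lemma p3_props:
  assumes "planar3tree u v z V E F"
  shows "finite V \<and> finite F \<and> u\<in>V \<and> v\<in>V \<and> z\<in>V \<and> distinct[u,v,z] \<and>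
    (\<forall>S\<in>F. S \<subseteq> V \<and> card S = 3 \<and> (\<forall>y\<in>S. \<forall>y'\<in>S. y \<noteq> y' \<longrightarrow> {y,y'} \<in> E)) \<and>
    (\<forall>w\<in>V. \<exists>S\<in>F. w\<in>S)"
  using assms
proof (induction rule: planar3tree.induct)
  case base
  then show ?case by (auto simp: insert_commute)
next
  case (step V E F a b c x)
  let ?S = "{a,b,c}"
  have IH: "finite V" "finite F" "u\<in>V" "v\<in>V" "z\<in>V" "distinct[u,v,z]"
    "\<And>S. S\<in>F \<Longrightarrow> S \<subseteq> V \<and> card S = 3 \<and> (\<forall>y\<in>S. \<forall>y'\<in>S. y \<noteq> y' \<longrightarrow> {y,y'} \<in> E)"
    "\<And>w. w\<in>V \<Longrightarrow> \<exists>S\<in>F. w\<in>S" using step.IH by (simp_all only: Ball_def) meson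
  have dS: "distinct [a,b,c]" proof -
    have "card {a,b,c} = 3" using IH(7)[OF step.hyps(2)] by (elim conjE)
    then show ?thesis by (rule card3_distinct)
  qed
  have SV: "?S \<subseteq> V" and SE: "\<forall>y\<in>?S. \<forall>y'\<in>?S. y \<noteq> y' \<longrightarrow> {y,y'} \<in> E"
    using IH(7)[OF step.hyps(2)] by auto
  have xa: "x \<noteq> a" "x \<noteq> b" "x \<noteq> c" using SV step.hyps(3) by auto
  show ?case
  proof (intro conjI)
    show "finite (insert x V)" using IH by simp
    show "finite (F - {?S} \<union> {{x, a, b}, {x, b, c}, {x, a, c}})" using IH by simp
    show "u \<in> insert x V" "v \<in> insert x V" "z \<in> insert x V" "distinct [u,v,z]" using IH by auto
  next
    show "\<forall>S\<in>F - {?S} \<union> {{x, a, b}, {x, b, c}, {x, a, c}}. S \<subseteq> insert x V \<and> card S = 3 \<and>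
       (\<forall>y\<in>S. \<forall>y'\<in>S. y \<noteq> y' \<longrightarrow> {y, y'} \<in> E \<union> {{x, a}, {x, b}, {x, c}})"
    proof
    fix S assume S: "S \<in> F - {?S} \<union> {{x, a, b}, {x, b, c}, {x, a, c}}"
    show "S \<subseteq> insert x V \<and> card S = 3 \<and>
       (\<forall>y\<in>S. \<forall>y'\<in>S. y \<noteq> y' \<longrightarrow> {y, y'} \<in> E \<union> {{x, a}, {x, b}, {x, c}})"
    proof (cases "S \<in> F")
      case True
      with S IH(7)[OF True] show ?thesis by blast
    next
      case False
      with S have "S = {x,a,b} \<or> S = {x,b,c} \<or> S = {x,a,c}" by auto
      then show ?thesis using SV SE xa dS by (auto simp: insert_commute)
    qed
    qed
  next
    show "\<forall>w\<in>insert x V. \<exists>S\<in>F - {?S} \<union> {{x, a, b}, {x, b, c}, {x, a, c}}. w \<in> S"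
    proof
    fix w assume w: "w \<in> insert x V"
    show "\<exists>S\<in>F - {?S} \<union> {{x, a, b}, {x, b, c}, {x, a, c}}. w \<in> S"
    proof (cases "w = x \<or> w \<in> ?S")
      case True then show ?thesis by auto
    next
      case False
      with w have "w \<in> V" by auto
      with IH(8) obtain S where "S \<in> F" "w \<in> S" by blast
      with False show ?thesis by auto
    qed
    qed
  qed
qed

lemma T3_perms: "T3 A B C = T3 B A C" "T3 A B C = T3 A C B" "T3 A B C = T3 B C A"
  "T3 A B C = T3 C A B" "T3 A B C = T3 C B A"
  by (metis T3_sym1 T3_sym2)+

lemma DD_perms: "DD A B C \<noteq> 0 \<Longrightarrow> DD B A C \<noteq> 0 \<and> DD A C B \<noteq> 0 \<and> DD B C A \<noteq> 0 \<and> DD C A B \<noteq> 0 \<and> DD C B A \<noteq> 0"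
  by (metis DD_sym1 DD_sym2 neg_equal_0_iff_equal)

lemma T3_E: "X \<in> T3 A B C \<Longrightarrow> (\<And>\<alpha> \<beta> \<gamma>. 0<\<alpha> \<Longrightarrow> 0<\<beta> \<Longrightarrow> 0<\<gamma> \<Longrightarrow> \<alpha>+\<beta>+\<gamma>=1 \<Longrightarrow> X = \<alpha> *\<^sub>R A + \<beta> *\<^sub>R B + \<gamma> *\<^sub>R C \<Longrightarrow> P) \<Longrightarrow> P"
  unfolding T3_def by blast

lemma W1: "X \<in> T3 A B C \<Longrightarrow> closed_segment X A \<subseteq> T3 A B C \<union> {A}"
  by (erule T3_E, rule G1) auto
lemma W2: "X \<in> T3 A B C \<Longrightarrow> T3 X A B \<subseteq> T3 A B C"
  by (erule T3_E, rule G2) auto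
lemma W3: "DD A B C \<noteq> 0 \<Longrightarrow> X \<in> T3 A B C \<Longrightarrow> closed_segment X A \<inter> closed_segment X B \<subseteq> {X}"
  by (erule T3_E, rule G3) auto
lemma W4a: "DD A B C \<noteq> 0 \<Longrightarrow> X \<in> T3 A B C \<Longrightarrow> T3 X A B \<inter> closed_segment X C = {}"
  by (erule T3_E, rule G4a) auto
lemma W4b: "DD A B C \<noteq> 0 \<Longrightarrow> X \<in> T3 A B C \<Longrightarrow> T3 X A B \<inter> closed_segment X A = {}"
  by (erule T3_E, rule G4b) auto
lemma W5: "DD A B C \<noteq> 0 \<Longrightarrow> X \<in> T3 A B C \<Longrightarrow> T3 X A B \<inter> T3 X B C = {}"
  by (erule T3_E, rule G5) auto

definition face_int :: "('a \<Rightarrow> real\<times>real) \<Rightarrow> 'a set \<Rightarrow> (real\<times>real) set" where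
  "face_int f S = {p. \<exists>w. (\<forall>y\<in>S. 0 < w y) \<and> sum w S = 1 \<and> p = (\<Sum>y\<in>S. w y *\<^sub>R f y)}"

lemma face_int_3:
  assumes "distinct [a,b,c]"
  shows "face_int f {a,b,c} = T3 (f a) (f b) (f c)"
proof
  show "face_int f {a,b,c} \<subseteq> T3 (f a) (f b) (f c)"
  proof
    fix p assume "p \<in> face_int f {a,b,c}"
    then obtain w where w: "\<forall>y\<in>{a,b,c}. 0 < w y" "sum w {a,b,c} = 1" "p = (\<Sum>y\<in>{a,b,c}. w y *\<^sub>R f y)"
      unfolding face_int_def by blast
    have e: "w a + w b + w c = 1" "p = w a *\<^sub>R f a + w b *\<^sub>R f b + w c *\<^sub>R f c"
      using w assms by (simp_all add: add.assoc)
    have pos: "0 < w a" "0 < w b" "0 < w c" using w(1) by auto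
    show "p \<in> T3 (f a) (f b) (f c)" unfolding e(2) using T3_mem[OF pos e(1)] .
  qed
next
  show "T3 (f a) (f b) (f c) \<subseteq> face_int f {a,b,c}"
  proof
    fix p assume "p \<in> T3 (f a) (f b) (f c)"
    then obtain \<alpha> \<beta> \<gamma> where h: "0<\<alpha>" "0<\<beta>" "0<\<gamma>" "\<alpha>+\<beta>+\<gamma>=1" "p = \<alpha> *\<^sub>R f a + \<beta> *\<^sub>R f b + \<gamma> *\<^sub>R f c"
      by (rule T3_E)
    define w where "w = (\<lambda>y. if y = a then \<alpha> else if y = b then \<beta> else \<gamma>)"
    have "(\<forall>y\<in>{a,b,c}. 0 < w y) \<and> sum w {a,b,c} = 1 \<and> p = (\<Sum>y\<in>{a,b,c}. w y *\<^sub>R f y)"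
      using h assms unfolding w_def by (auto simp: add.assoc)
    then show "p \<in> face_int f {a,b,c}" unfolding face_int_def by blast
  qed
qed

lemma face_int_cong: "(\<And>y. y \<in> S \<Longrightarrow> f y = f' y) \<Longrightarrow> face_int f S = face_int f' S"
  unfolding face_int_def by (metis (no_types, lifting) sum.cong)

definition geo :: "'a set \<Rightarrow> 'a set set \<Rightarrow> 'a set set \<Rightarrow> ('a \<Rightarrow> real\<times>real) \<Rightarrow> bool" where
  "geo V E F f \<longleftrightarrow> inj_on f V \<and>
     (\<forall>e\<in>E. \<forall>e'\<in>E. e \<noteq> e' \<longrightarrow> convex hull (f ` e) \<inter> convex hull (f ` e') \<subseteq> f ` (e \<inter> e')) \<and>
     (\<forall>S\<in>F. \<forall>e\<in>E. face_int f S \<inter> convex hull (f ` e) = {}) \<and>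
     (\<forall>S\<in>F. \<forall>S'\<in>F. S \<noteq> S' \<longrightarrow> face_int f S \<inter> face_int f S' = {})"

lemma hull2: "convex hull (f ` {a,b}) = closed_segment (f a) (f b)"
  by (simp add: segment_convex_hull)

lemma relabel2:
  assumes "distinct [a,b,c]" "y \<in> {a,b,c}" "y' \<in> {a,b,c}" "y \<noteq> y'"
  obtains t where "{a,b,c} = {y,y',t}" "distinct [y,y',t]"
    "T3 (f y) (f y') (f t) = T3 (f a) (f b) (f c)"
    "DD (f a) (f b) (f c) \<noteq> 0 \<Longrightarrow> DD (f y) (f y') (f t) \<noteq> 0"
proof -
  from assms(2,3,4) consider "y = a" "y' = b" | "y = a" "y' = c" | "y = b" "y' = a" | "y = b" "y' = c"
     | "y = c" "y' = a" | "y = c" "y' = b" by auto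
  then show ?thesis
  proof cases
    case 1 then show ?thesis using that[of c] assms by auto
  next
    case 2
    have "T3 (f y) (f y') (f b) = T3 (f a) (f b) (f c)" using 2 by (metis T3_sym2)
    moreover have "DD (f a) (f b) (f c) \<noteq> 0 \<Longrightarrow> DD (f y) (f y') (f b) \<noteq> 0" using 2 by (metis DD_sym2 neg_equal_0_iff_equal)
    ultimately show ?thesis using that[of b] 2 assms by (auto simp: insert_commute)
  next
    case 3
    have "T3 (f y) (f y') (f c) = T3 (f a) (f b) (f c)" using 3 by (metis T3_sym1)
    moreover have "DD (f a) (f b) (f c) \<noteq> 0 \<Longrightarrow> DD (f y) (f y') (f c) \<noteq> 0" using 3 by (metis DD_sym1 neg_equal_0_iff_equal)
    ultimately show ?thesis using that[of c] 3 assms by (auto simp: insert_commute)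
  next
    case 4
    have "T3 (f y) (f y') (f a) = T3 (f a) (f b) (f c)" using 4 by (metis T3_sym1 T3_sym2)
    moreover have "DD (f a) (f b) (f c) \<noteq> 0 \<Longrightarrow> DD (f y) (f y') (f a) \<noteq> 0" using 4 by (metis DD_sym1 DD_sym2 neg_equal_0_iff_equal)
    ultimately show ?thesis using that[of a] 4 assms by (auto simp: insert_commute)
  next
    case 5
    have "T3 (f y) (f y') (f b) = T3 (f a) (f b) (f c)" using 5 by (metis T3_sym1 T3_sym2)
    moreover have "DD (f a) (f b) (f c) \<noteq> 0 \<Longrightarrow> DD (f y) (f y') (f b) \<noteq> 0" using 5 by (metis DD_sym1 DD_sym2 neg_equal_0_iff_equal)
    ultimately show ?thesis using that[of b] 5 assms by (auto simp: insert_commute)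
  next
    case 6
    have "T3 (f y) (f y') (f a) = T3 (f a) (f b) (f c)" using 6 by (metis T3_sym1 T3_sym2)
    moreover have "DD (f a) (f b) (f c) \<noteq> 0 \<Longrightarrow> DD (f y) (f y') (f a) \<noteq> 0" using 6 by (metis DD_sym1 DD_sym2 neg_equal_0_iff_equal)
    ultimately show ?thesis using that[of a] 6 assms by (auto simp: insert_commute)
  qed
qed

lemma other_exists: "distinct [a,b,c] \<Longrightarrow> y \<in> {a,b,c} \<Longrightarrow> \<exists>y'\<in>{a,b,c}. y' \<noteq> y"
  by auto

lemma card3_other: "card S = 3 \<Longrightarrow> y \<in> S \<Longrightarrow> \<exists>y'\<in>S. y' \<noteq> y"
proof (rule ccontr)
  assume "card S = 3" "y \<in> S" "\<not> (\<exists>y'\<in>S. y' \<noteq> y)"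
  then have "S \<subseteq> {y}" by blast
  then have "card S \<le> card {y}" by (intro card_mono) auto
  with \<open>card S = 3\<close> show False by simp
qed

lemma geo_step:
  assumes g: "geo V E F f"
    and EV: "\<forall>e\<in>E. e \<subseteq> V"
    and FV: "\<forall>S'\<in>F. S' \<subseteq> V \<and> card S' = 3 \<and> (\<forall>y\<in>S'. \<forall>y'\<in>S'. y \<noteq> y' \<longrightarrow> {y,y'} \<in> E)"
    and cov: "\<forall>w\<in>V. \<exists>S'\<in>F. w \<in> S'"
    and S: "S \<in> F" "S = {a,b,c}" "distinct [a,b,c]" and x: "x \<notin> V"
    and f': "\<forall>w\<in>V. f' w = f w"
    and X: "f' x \<in> T3 (f a) (f b) (f c)" and D: "DD (f a) (f b) (f c) \<noteq> 0"
  shows "geo (insert x V) (E \<union> (\<lambda>y. {x,y}) ` S) (F - {S} \<union> (\<lambda>y. insert x (S - {y})) ` S) f'"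
proof -
  let ?T = "T3 (f a) (f b) (f c)"
  let ?X = "f' x"
  have G1: "inj_on f V" using g unfolding geo_def by (elim conjE) assumption
  have G2: "\<forall>e\<in>E. \<forall>e'\<in>E. e \<noteq> e' \<longrightarrow> convex hull (f ` e) \<inter> convex hull (f ` e') \<subseteq> f ` (e \<inter> e')"
    using g unfolding geo_def by (elim conjE) assumption
  have G3: "\<forall>S\<in>F. \<forall>e\<in>E. face_int f S \<inter> convex hull (f ` e) = {}"
    using g unfolding geo_def by (elim conjE) assumption
  have G4: "\<forall>S\<in>F. \<forall>S'\<in>F. S \<noteq> S' \<longrightarrow> face_int f S \<inter> face_int f S' = {}"
    using g unfolding geo_def by (elim conjE) assumption
  note G = G1 G2 G3 G4
  have FV1: "\<And>S'. S'\<in>F \<Longrightarrow> S' \<subseteq> V" using FV by (meson bspec)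
  have FV2: "\<And>S'. S'\<in>F \<Longrightarrow> card S' = 3" using FV by (meson bspec)
  have FV3: "\<And>S' y y'. S'\<in>F \<Longrightarrow> y\<in>S' \<Longrightarrow> y'\<in>S' \<Longrightarrow> y\<noteq>y' \<Longrightarrow> {y,y'}\<in>E"
  proof -
    fix S' y y' assume h: "S'\<in>F" "y\<in>S'" "y'\<in>S'" "y\<noteq>y'"
    show "{y,y'}\<in>E" using bspec[OF FV h(1)] h by blast
  qed
  have inj: "inj_on f V" by (rule G(1))
  have EE: "\<And>e e'. e\<in>E \<Longrightarrow> e'\<in>E \<Longrightarrow> e \<noteq> e' \<Longrightarrow> convex hull (f ` e) \<inter> convex hull (f ` e') \<subseteq> f ` (e \<inter> e')"
    using G(2) by blast
  have FE: "\<And>S e. S\<in>F \<Longrightarrow> e\<in>E \<Longrightarrow> face_int f S \<inter> convex hull (f ` e) = {}"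
    using G(3) by blast
  have FF: "\<And>S S'. S\<in>F \<Longrightarrow> S'\<in>F \<Longrightarrow> S \<noteq> S' \<Longrightarrow> face_int f S \<inter> face_int f S' = {}"
    using G(4) by blast
  have SV: "S \<subseteq> V" using FV1 FV2 S(1) by blast
  have xS: "x \<notin> S" using SV x by blast
  have img_old: "\<And>e. e \<subseteq> V \<Longrightarrow> f' ` e = f ` e" using f' by (meson image_cong subsetD)
  have fi_old: "\<And>S'. S' \<subseteq> V \<Longrightarrow> face_int f' S' = face_int f S'"
    using f' by (metis face_int_cong subsetD)
  have TS: "face_int f S = ?T" using face_int_3[OF S(3)] S(2) by simp
  have fS: "\<And>y. y \<in> S \<Longrightarrow> f' y = f y" using SV f' by blast
  have vnf: "f w \<notin> face_int f S'" if hyp: "S' \<in> F" "w \<in> V" for S' w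
  proof -
    obtain S2 where S2: "S2 \<in> F" "w \<in> S2" using cov hyp(2) by blast
    have c3: "card S2 = 3" using FV2 S2(1) by blast
    obtain w' where w': "w' \<in> S2" "w' \<noteq> w" using card3_other[OF c3 S2(2)] by blast
    have "{w,w'} \<in> E" using FV3 S2 w' by blast
    moreover have "f w \<in> convex hull (f ` {w,w'})" by (simp add: hull_inc)
    ultimately show ?thesis using FE[OF hyp(1)] by blast
  qed
  have XT: "?X \<in> ?T" using X .
  have XnV: "?X \<notin> f ` V"
  proof
    assume "?X \<in> f ` V"
    then obtain w where "w \<in> V" "?X = f w" by blast
    with vnf[OF S(1)] XT TS show False by simp
  qed
  have pairs: "\<exists>t. S = {y,y',t} \<and> distinct [y,y',t] \<and> T3 (f y) (f y') (f t) = ?T \<and> DD (f y) (f y') (f t) \<noteq> 0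
      \<and> face_int f' (insert x (S - {y})) = T3 ?X (f y') (f t)
      \<and> face_int f' (insert x (S - {y'})) = T3 ?X (f y) (f t)"
    if hyp: "y \<in> S" "y' \<in> S" "y \<noteq> y'" for y y'
  proof -
    have ya: "y \<in> {a,b,c}" "y' \<in> {a,b,c}" using hyp S(2) by simp_all
    obtain t where t: "{a,b,c} = {y,y',t}" "distinct [y,y',t]" "T3 (f y) (f y') (f t) = ?T"
      "DD (f a) (f b) (f c) \<noteq> 0 \<Longrightarrow> DD (f y) (f y') (f t) \<noteq> 0"
      using relabel2[OF S(3) ya hyp(3), of f] by metis
    note t = t(1-3) t(4)[OF D]
    have e1: "insert x (S - {y}) = {x,y',t}" using t S(2) by auto
    have e2: "insert x (S - {y'}) = {x,y,t}" using t S(2) by auto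
    have d1: "distinct [x,y',t]" "distinct [x,y,t]" using t xS S(2) by auto
    have "face_int f' (insert x (S - {y})) = T3 ?X (f y') (f t)"
      unfolding e1 face_int_3[OF d1(1)] using fS t S(2) by simp
    moreover have "face_int f' (insert x (S - {y'})) = T3 ?X (f y) (f t)"
      unfolding e2 face_int_3[OF d1(2)] using fS t S(2) by simp
    ultimately show ?thesis using t S(2) by blast
  qed
  have hull_new: "convex hull (f' ` {x,y}) = closed_segment ?X (f y)" if "y \<in> S" for y
    using fS[OF that] hull2[of f' x y] by simp
  have seg_sub: "closed_segment ?X (f y) \<subseteq> ?T \<union> {f y}" if hyp: "y \<in> S" for y
  proof -
    have c3: "card S = 3" using FV1 FV2 S(1) by blast
    obtain y' where yy: "y' \<in> S" "y' \<noteq> y" using card3_other[OF c3 hyp] by blast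
    obtain t where "T3 (f y) (f y') (f t) = ?T" using pairs[OF hyp yy(1)] yy(2) by metis
    then show ?thesis using W1 XT by metis
  qed
  have new_old: "convex hull (f' ` {x,y}) \<inter> convex hull (f' ` e') \<subseteq> f' ` ({x,y} \<inter> e')"
    if y: "y \<in> S" and e': "e' \<in> E" for y e'
  proof
    fix p assume p: "p \<in> convex hull (f' ` {x,y}) \<inter> convex hull (f' ` e')"
    have e'V: "e' \<subseteq> V" using EV e' by blast
    have h': "convex hull (f' ` e') = convex hull (f ` e')" using img_old[OF e'V] by simp
    have "?T \<inter> convex hull (f ` e') = {}" using FE[OF S(1) e'] TS by simp
    with p seg_sub[OF y] hull_new[OF y] h' have pA: "p = f y" "f y \<in> convex hull (f ` e')" by auto
    have "y \<in> e'"
    proof (rule ccontr)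
      assume ny: "y \<notin> e'"
      have c3: "card S = 3" using FV1 FV2 S(1) by blast
      obtain y' where y': "y' \<in> S" "y' \<noteq> y" using card3_other[OF c3 y] by blast
      have yy: "{y,y'} \<in> E" using FV3[OF S(1) y y'(1)] y'(2) by blast
      have "{y,y'} \<noteq> e'" using ny by blast
      from EE[OF yy e' this] pA(2) have "f y \<in> f ` ({y,y'} \<inter> e')" by (auto simp: hull_inc)
      then obtain w where w: "w \<in> {y,y'} \<inter> e'" "f y = f w" by blast
      with ny have "w = y'" by blast
      with w inj y y' SV show False by (metis inj_on_contraD subsetD)
    qed
    then have "y \<in> {x,y} \<inter> e'" by simp
    then show "p \<in> f' ` ({x,y} \<inter> e')" using pA fS[OF y] by (metis image_eqI)
  qed
  have new_new: "convex hull (f' ` {x,y}) \<inter> convex hull (f' ` {x,y'}) \<subseteq> f' ` ({x,y} \<inter> {x,y'})"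
    if hyp: "y \<in> S" "y' \<in> S" "y \<noteq> y'" for y y'
  proof -
    obtain t where t: "T3 (f y) (f y') (f t) = ?T" "DD (f y) (f y') (f t) \<noteq> 0" using pairs[OF hyp] by blast
    have "closed_segment ?X (f y) \<inter> closed_segment ?X (f y') \<subseteq> {?X}"
      using W3[OF t(2)] XT t(1) by simp
    moreover have "f' ` ({x,y} \<inter> {x,y'}) = {?X}" using hyp by auto
    ultimately show ?thesis using hull_new hyp by simp
  qed
  have newface: "\<exists>y' t. S = {y,y',t} \<and> T3 (f y') (f t) (f y) = ?T \<and> DD (f y') (f t) (f y) \<noteq> 0
      \<and> face_int f' (insert x (S - {y})) = T3 ?X (f y') (f t)" if hyp: "y \<in> S" for y
  proof -
    have c3: "card S = 3" using FV1 FV2 S(1) by blast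
    obtain y' where yy: "y' \<in> S" "y' \<noteq> y" using card3_other[OF c3 hyp] by blast
    obtain t where t: "S = {y,y',t}" "T3 (f y) (f y') (f t) = ?T" "DD (f y) (f y') (f t) \<noteq> 0"
      "face_int f' (insert x (S - {y})) = T3 ?X (f y') (f t)"
      using pairs[OF hyp yy(1)] yy(2) by metis
    have "T3 (f y') (f t) (f y) = ?T" using t(2) T3_perms(3) by metis
    moreover have "DD (f y') (f t) (f y) \<noteq> 0" using DD_perms[OF t(3)] by blast
    ultimately show ?thesis using t by blast
  qed
  have oldface_oldedge: "S1 \<in> F \<Longrightarrow> e \<in> E \<Longrightarrow> face_int f' S1 \<inter> convex hull (f' ` e) = {}" for S1 e
    using fi_old[OF FV1] img_old EV FE by metis
  have oldface_newedge: "face_int f' S1 \<inter> convex hull (f' ` {x,y}) = {}" if hyp: "S1 \<in> F" "S1 \<noteq> S" "y \<in> S" for S1 y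
  proof -
    have "face_int f' S1 = face_int f S1" using fi_old FV1 hyp(1) by blast
    moreover have "face_int f S1 \<inter> ?T = {}" using FF[OF hyp(1) S(1) hyp(2)] TS by simp
    moreover have "f y \<notin> face_int f S1" using vnf[OF hyp(1)] SV hyp(3) by blast
    ultimately show ?thesis using seg_sub[OF hyp(3)] hull_new[OF hyp(3)] by blast
  qed
  have newface_oldedge: "face_int f' (insert x (S - {y})) \<inter> convex hull (f' ` e) = {}" if hyp: "y \<in> S" "e \<in> E" for y e
  proof -
    obtain y' t where t: "T3 (f y') (f t) (f y) = ?T" "face_int f' (insert x (S - {y})) = T3 ?X (f y') (f t)"
      using newface[OF hyp(1)] by blast
    have "T3 ?X (f y') (f t) \<subseteq> ?T" using W2[of ?X "f y'" "f t" "f y"] t(1) XT by simp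
    moreover have "?T \<inter> convex hull (f ` e) = {}" using FE[OF S(1) hyp(2)] TS by simp
    moreover have "f' ` e = f ` e" using img_old EV hyp(2) by blast
    ultimately show ?thesis using t(2) by auto
  qed
  have newface_newedge: "face_int f' (insert x (S - {y})) \<inter> convex hull (f' ` {x,w}) = {}" if hyp: "y \<in> S" "w \<in> S" for y w
  proof -
    obtain y' t where t: "S = {y,y',t}" "T3 (f y') (f t) (f y) = ?T" "DD (f y') (f t) (f y) \<noteq> 0"
      "face_int f' (insert x (S - {y})) = T3 ?X (f y') (f t)"
      using newface[OF hyp(1)] by blast
    have XT': "?X \<in> T3 (f y') (f t) (f y)" using XT t(2) by simp
    have "T3 ?X (f y') (f t) \<inter> closed_segment ?X (f w) = {}"
    proof -
      from hyp(2) t(1) consider "w = y" | "w = y'" | "w = t" by blast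
      then show ?thesis
      proof cases
        case 1 then show ?thesis using W4a[OF t(3) XT'] by simp
      next
        case 2 then show ?thesis using W4b[OF t(3) XT'] by simp
      next
        case 3
        have D': "DD (f t) (f y') (f y) \<noteq> 0" using DD_perms[OF t(3)] by blast
        have X': "?X \<in> T3 (f t) (f y') (f y)" using XT' T3_perms(1) by metis
        have "T3 ?X (f t) (f y') = T3 ?X (f y') (f t)" using T3_perms(2) by metis
        then show ?thesis using W4b[OF D' X'] 3 by simp
      qed
    qed
    then show ?thesis using t(4) hull_new[OF hyp(2)] by simp
  qed
  have newface_newface: "face_int f' (insert x (S - {y1})) \<inter> face_int f' (insert x (S - {y2})) = {}"
    if hyp: "y1 \<in> S" "y2 \<in> S" "y1 \<noteq> y2" for y1 y2
  proof -
    obtain t where t: "T3 (f y1) (f y2) (f t) = ?T" "DD (f y1) (f y2) (f t) \<noteq> 0"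
      "face_int f' (insert x (S - {y1})) = T3 ?X (f y2) (f t)"
      "face_int f' (insert x (S - {y2})) = T3 ?X (f y1) (f t)"
      using pairs[OF hyp] by metis
    have D': "DD (f y2) (f t) (f y1) \<noteq> 0" using DD_perms[OF t(2)] by blast
    have X': "?X \<in> T3 (f y2) (f t) (f y1)" using XT t(1) T3_perms(3) by metis
    have "T3 ?X (f y1) (f t) = T3 ?X (f t) (f y1)" using T3_perms(2) by metis
    then show ?thesis using W5[OF D' X'] t(3,4) by simp
  qed
  have newface_sub: "face_int f' (insert x (S - {y})) \<subseteq> ?T" if hyp: "y \<in> S" for y
  proof -
    obtain y' t where t: "T3 (f y') (f t) (f y) = ?T" "face_int f' (insert x (S - {y})) = T3 ?X (f y') (f t)"
      using newface[OF hyp(1)] by blast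
    show ?thesis using W2[of ?X "f y'" "f t" "f y"] t XT by simp
  qed
  have inj': "inj_on f' (insert x V)"
  proof -
    have "inj_on f' V = inj_on f V" by (rule inj_on_cong) (use f' in simp)
    with inj have "inj_on f' V" by simp
    moreover have "f' ` V = f ` V" using img_old by simp
    moreover have "V - {x} = V" using x by blast
    ultimately show ?thesis using XnV by simp
  qed
  show ?thesis unfolding geo_def
  proof (intro conjI ballI impI)
    show "inj_on f' (insert x V)" by (rule inj')
  next
    fix e e' assume e: "e \<in> E \<union> (\<lambda>y. {x,y}) ` S" and e': "e' \<in> E \<union> (\<lambda>y. {x,y}) ` S" and ne: "e \<noteq> e'"
    show "convex hull f' ` e \<inter> convex hull f' ` e' \<subseteq> f' ` (e \<inter> e')"
    proof (cases "e \<in> E")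
      case eE: True
      show ?thesis
      proof (cases "e' \<in> E")
        case True
        have "f' ` e = f ` e" "f' ` e' = f ` e'" "f' ` (e \<inter> e') = f ` (e \<inter> e')"
          using img_old EV eE True by blast+
        then show ?thesis using EE[OF eE True ne] by simp
      next
        case False
        then obtain y where y: "y \<in> S" "e' = {x,y}" using e' by blast
        show ?thesis using new_old[OF y(1) eE] y(2) by (simp add: Int_commute)
      qed
    next
      case False
      then obtain y where y: "y \<in> S" "e = {x,y}" using e by blast
      show ?thesis
      proof (cases "e' \<in> E")
        case True
        then show ?thesis using new_old[OF y(1) True] y(2) by simp
      next
        case False
        then obtain y' where y': "y' \<in> S" "e' = {x,y'}" using e' by blast
        with y ne have "y \<noteq> y'" by blast
        then show ?thesis using new_new[OF y(1) y'(1)] y(2) y'(2) by simp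
      qed
    qed
  next
    fix S1 e assume S1: "S1 \<in> F - {S} \<union> (\<lambda>y. insert x (S - {y})) ` S" and e: "e \<in> E \<union> (\<lambda>y. {x,y}) ` S"
    show "face_int f' S1 \<inter> convex hull f' ` e = {}"
    proof (cases "S1 \<in> F - {S}")
      case True
      show ?thesis
      proof (cases "e \<in> E")
        case eE: True
        show ?thesis using oldface_oldedge[OF _ eE] True by blast
      next
        case False
        then obtain y where y: "y \<in> S" "e = {x,y}" using e by blast
        show ?thesis using oldface_newedge[of S1 y] True y by blast
      qed
    next
      case False
      then obtain y where y: "y \<in> S" "S1 = insert x (S - {y})" using S1 by blast
      show ?thesis
      proof (cases "e \<in> E")
        case eE: True
        show ?thesis using newface_oldedge[OF y(1) eE] y(2) by simp
      next
        case False
        then obtain w where w: "w \<in> S" "e = {x,w}" using e by blast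
        show ?thesis using newface_newedge[OF y(1) w(1)] y(2) w(2) by simp
      qed
    qed
  next
    fix S1 S2 assume S1: "S1 \<in> F - {S} \<union> (\<lambda>y. insert x (S - {y})) ` S"
      and S2: "S2 \<in> F - {S} \<union> (\<lambda>y. insert x (S - {y})) ` S" and ne: "S1 \<noteq> S2"
    show "face_int f' S1 \<inter> face_int f' S2 = {}"
    proof (cases "S1 \<in> F - {S}")
      case T1: True
      show ?thesis
      proof (cases "S2 \<in> F - {S}")
        case True
        then show ?thesis using FF[of S1 S2] T1 ne fi_old FV1 by auto
      next
        case False
        then obtain y where y: "y \<in> S" "S2 = insert x (S - {y})" using S2 by blast
        have "face_int f' S1 \<inter> ?T = {}" using FF[OF _ S(1), of S1] T1 TS fi_old FV1 by auto
        then show ?thesis using newface_sub[OF y(1)] y(2) by blast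
      qed
    next
      case F1: False
      then obtain y where y: "y \<in> S" "S1 = insert x (S - {y})" using S1 by blast
      show ?thesis
      proof (cases "S2 \<in> F - {S}")
        case T2: True
        have "face_int f' S2 \<inter> ?T = {}" using FF[OF _ S(1), of S2] T2 TS fi_old FV1 by auto
        then show ?thesis using newface_sub[OF y(1)] y(2) by blast
      next
        case False
        then obtain y' where y': "y' \<in> S" "S2 = insert x (S - {y'})" using S2 by blast
        with y ne have "y \<noteq> y'" by blast
        then show ?thesis using newface_newface[OF y(1) y'(1)] y(2) y'(2) by simp
      qed
    qed
  qed
qed

lemma split_card:
  fixes B :: "int set"
  assumes "finite B" "card B \<ge> s + t + 1"
  shows "\<exists>p\<in>B. card {b\<in>B. b < p} \<ge> s \<and> card {b\<in>B. p < b} \<ge> t"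
  using assms
proof (induction s arbitrary: B)
  case 0
  then have ne: "B \<noteq> {}" by auto
  let ?m = "Min B"
  have m: "?m \<in> B" using Min_in[OF 0(1) ne] .
  have e: "{b\<in>B. ?m < b} = B - {?m}" using Min_le[OF 0(1)] by force
  have "card (B - {?m}) \<ge> t" using 0(2) m 0(1) by simp
  hence "card {b\<in>B. ?m < b} \<ge> t" unfolding e .
  then show ?case using m by auto
next
  case (Suc s)
  have ne: "B \<noteq> {}" using Suc.prems by auto
  let ?m = "Min B"
  have m: "?m \<in> B" using Min_in[OF Suc(2) ne] .
  have fB': "finite (B - {?m})" using Suc(2) by simp
  have "card (B - {?m}) \<ge> s + t + 1" using Suc(3) m Suc(2) by simp
  from Suc.IH[OF fB' this] obtain p where p: "p \<in> B - {?m}" "card {b\<in>B - {?m}. b < p} \<ge> s"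
    "card {b\<in>B - {?m}. p < b} \<ge> t" by blast
  have mp: "?m < p" using p(1) Min_le[OF Suc(2)] by (metis DiffD1 DiffD2 insertI1 order_le_less)
  have "{b\<in>B. b < p} = insert ?m {b\<in>B - {?m}. b < p}" using mp m by auto
  moreover have "?m \<notin> {b\<in>B - {?m}. b < p}" by simp
  moreover have "finite {b\<in>B - {?m}. b < p}" using fB' by simp
  ultimately have "card {b\<in>B. b < p} = Suc (card {b\<in>B - {?m}. b < p})" by simp
  hence c1: "card {b\<in>B. b < p} \<ge> Suc s" using p(2) by simp
  have "card {b\<in>B - {?m}. p < b} \<le> card {b\<in>B. p < b}" using Suc(2) by (intro card_mono) auto
  hence c2: "card {b\<in>B. p < b} \<ge> t" using p(3) by simp
  show ?case using c1 c2 p(1) by blast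
qed

lemma split_interval:
  fixes A :: "int set"
  assumes "finite A" "card (A \<inter> {lo<..<hi}) \<ge> s + t + 1"
  shows "\<exists>p\<in>A. lo < p \<and> p < hi \<and> card (A \<inter> {lo<..<p}) \<ge> s \<and> card (A \<inter> {p<..<hi}) \<ge> t"
proof -
  let ?B = "A \<inter> {lo<..<hi}"
  obtain p where p: "p \<in> ?B" "card {b\<in>?B. b < p} \<ge> s" "card {b\<in>?B. p < b} \<ge> t"
    using split_card[of ?B s t] assms by auto
  have "{b\<in>?B. b < p} = A \<inter> {lo<..<p}" using p(1) by auto
  moreover have "{b\<in>?B. p < b} = A \<inter> {p<..<hi}" using p(1) by auto
  ultimately show ?thesis using p by auto
qed

lemma DD_perm_set:
  assumes "distinct [a,b,c]" "distinct [L,R,C]" "{a,b,c} = {L,R,C}" "DD (f L) (f R) (f C) \<noteq> 0"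
  shows "DD (f a) (f b) (f c) \<noteq> 0"
proof -
  have "a \<in> {L,R,C}" "b \<in> {L,R,C}" "c \<in> {L,R,C}" using assms(3) by blast+
  then show ?thesis using assms(1,2,4) DD_perms[OF assms(4)] by auto
qed

lemma swapI: "A \<inter> B \<subseteq> f ` (s \<inter> t) \<Longrightarrow> B \<inter> A \<subseteq> f ` (t \<inter> s)"
  by (metis Int_commute)

lemma geo_base:
  assumes d: "distinct [u,v,z]" and D: "DD (f u) (f v) (f z) \<noteq> 0"
  shows "geo {u,v,z} {{u,v},{v,z},{u,z}} {{u,v,z}} f"
proof -
  have dd: "f u \<noteq> f v" "f v \<noteq> f z" "f u \<noteq> f z" using DD_distinct[OF D] by auto
  have inj: "inj_on f {u,v,z}" using dd by auto
  have h: "\<And>a b. convex hull (f ` {a,b}) = closed_segment (f a) (f b)" by (rule hull2)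
  have P: "DD (f v) (f u) (f z) \<noteq> 0" "DD (f v) (f z) (f u) \<noteq> 0" "DD (f u) (f z) (f v) \<noteq> 0"
    using DD_perms[OF D] by auto
  have E1: "closed_segment (f u) (f v) \<inter> closed_segment (f v) (f z) \<subseteq> f ` ({u,v} \<inter> {v,z})"
    using B2[OF D] d by auto
  have E2: "closed_segment (f u) (f v) \<inter> closed_segment (f u) (f z) \<subseteq> f ` ({u,v} \<inter> {u,z})"
    using B2[OF P(1)] d by (auto simp: closed_segment_commute)
  have E3: "closed_segment (f v) (f z) \<inter> closed_segment (f u) (f z) \<subseteq> f ` ({v,z} \<inter> {u,z})"
    using B2[OF P(2)] d by (auto simp: closed_segment_commute)
  have T: "face_int f {u,v,z} = T3 (f u) (f v) (f z)" using face_int_3[OF d] .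
  have F1: "T3 (f u) (f v) (f z) \<inter> closed_segment (f u) (f v) = {}" using B1[OF D] by blast
  have F2: "T3 (f u) (f v) (f z) \<inter> closed_segment (f v) (f z) = {}"
    using B1[OF P(2)] T3_perms(3)[of "f u" "f v" "f z"] by blast
  have F3: "T3 (f u) (f v) (f z) \<inter> closed_segment (f u) (f z) = {}"
    using B1[OF P(3)] T3_perms(2)[of "f u" "f v" "f z"] by blast
  show ?thesis unfolding geo_def
  proof (intro conjI ballI impI)
    show "inj_on f {u,v,z}" by (rule inj)
  next
    fix e e' assume "e \<in> {{u, v}, {v, z}, {u, z}}" "e' \<in> {{u, v}, {v, z}, {u, z}}" "e \<noteq> e'"
    note ee = this
    from ee(1) consider "e = {u,v}" | "e = {v,z}" | "e = {u,z}" by blast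
    then show "convex hull f ` e \<inter> convex hull f ` e' \<subseteq> f ` (e \<inter> e')"
    proof cases
      case 1
      from ee(2) consider "e' = {u,v}" | "e' = {v,z}" | "e' = {u,z}" by blast
      then show ?thesis
      proof cases
        case 1 then show ?thesis using ee(3) \<open>e = {u,v}\<close> by simp
      next
        case 2 then show ?thesis using \<open>e = {u,v}\<close> by (simp only: h) (rule E1)
      next
        case 3 then show ?thesis using \<open>e = {u,v}\<close> by (simp only: h) (rule E2)
      qed
    next
      case 2
      from ee(2) consider "e' = {u,v}" | "e' = {v,z}" | "e' = {u,z}" by blast
      then show ?thesis
      proof cases
        case 1 then show ?thesis using \<open>e = {v,z}\<close> by (simp only: h) (rule swapI[OF E1])
      next
        case 2 then show ?thesis using ee(3) \<open>e = {v,z}\<close> by simp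
      next
        case 3 then show ?thesis using \<open>e = {v,z}\<close> by (simp only: h) (rule E3)
      qed
    next
      case 3
      from ee(2) consider "e' = {u,v}" | "e' = {v,z}" | "e' = {u,z}" by blast
      then show ?thesis
      proof cases
        case 1 then show ?thesis using \<open>e = {u,z}\<close> by (simp only: h) (rule swapI[OF E2])
      next
        case 2 then show ?thesis using \<open>e = {u,z}\<close> by (simp only: h) (rule swapI[OF E3])
      next
        case 3 then show ?thesis using ee(3) \<open>e = {u,z}\<close> by simp
      qed
    qed
  next
    fix S e assume "S \<in> {{u,v,z}}" "e \<in> {{u, v}, {v, z}, {u, z}}"
    then show "face_int f S \<inter> convex hull f ` e = {}" using T F1 F2 F3 h by auto
  next
    fix S S' assume "S \<in> {{u,v,z}}" "S' \<in> {{u,v,z}}" "S \<noteq> S'"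
    then show "face_int f S \<inter> face_int f S' = {}" by simp
  qed
qed

definition goodt :: "('a \<Rightarrow> int\<times>int) \<Rightarrow> 'a \<Rightarrow> 'a \<Rightarrow> 'a \<Rightarrow> bool" where
  "goodt g L R C \<longleftrightarrow> fst (g L) < fst (g R) \<and> snd (g L) < snd (g C) \<and> snd (g R) < snd (g C)"

definition capok :: "int set \<Rightarrow> int set \<Rightarrow> ('a \<Rightarrow> int\<times>int) \<Rightarrow> ('a set \<Rightarrow> nat) \<Rightarrow> 'a set \<Rightarrow> bool" where
  "capok X Y g cap S \<longleftrightarrow> (\<exists>L R C. S = {L,R,C} \<and> distinct [L,R,C] \<and> goodt g L R C \<and>
     cap S \<le> card (X \<inter> {fst (g L)<..<fst (g R)}) \<and>
     cap S \<le> card (Y \<inter> {max (snd (g L)) (snd (g R))<..<snd (g C)}))"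

definition embf :: "nat \<Rightarrow> ('a \<Rightarrow> int\<times>int) \<Rightarrow> 'a \<Rightarrow> real\<times>real" where
  "embf n g = (\<lambda>w. tau n (rpt (g w)))"

lemma capok_cong:
  assumes "capok X Y g cap S" "\<And>w. w \<in> S \<Longrightarrow> g' w = g w" "cap' S = cap S"
  shows "capok X Y g' cap' S"
proof -
  obtain L R C where h: "S = {L,R,C}" "distinct [L,R,C]" "goodt g L R C"
     "cap S \<le> card (X \<inter> {fst (g L)<..<fst (g R)})"
     "cap S \<le> card (Y \<inter> {max (snd (g L)) (snd (g R))<..<snd (g C)})"
    using assms(1) unfolding capok_def by blast
  have gg: "g' L = g L" "g' R = g R" "g' C = g C" using assms(2) h(1) by auto
  show ?thesis unfolding capok_def
    by (rule exI[of _ L], rule exI[of _ R], rule exI[of _ C]) (use h assms(3) gg in \<open>simp add: goodt_def\<close>)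
qed

lemma gridA_bounds: "p \<in> sparse_grid n d \<Longrightarrow> 0 \<le> fst p \<and> fst p \<le> 14 * int n \<and> 0 \<le> snd p \<and> snd p \<le> 14 * int n"
  unfolding sparse_grid_def gridA_def by auto

lemma good_DD_g:
  assumes "n \<ge> 1" "goodt g L R C" "g L \<in> sparse_grid n d" "g R \<in> sparse_grid n d" "g C \<in> sparse_grid n d"
  shows "DD (embf n g L) (embf n g R) (embf n g C) > 0"
proof -
  obtain l1 ly where l: "g L = (l1,ly)" by (cases "g L")
  obtain r1 ry where r: "g R = (r1,ry)" by (cases "g R")
  obtain c1 cy where c: "g C = (c1,cy)" by (cases "g C")
  show ?thesis unfolding embf_def l r c
    using good_DD[of n l1 r1 ly cy ry c1] assms gridA_bounds[OF assms(3)] gridA_bounds[OF assms(4)]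
      gridA_bounds[OF assms(5)] unfolding goodt_def l r c by simp
qed

lemma p3_facesall:
  assumes "planar3tree u v z V E F"
  shows "\<forall>S\<in>F. S \<subseteq> V \<and> card S = 3 \<and> (\<forall>y\<in>S. \<forall>y'\<in>S. y \<noteq> y' \<longrightarrow> {y,y'} \<in> E)"
  using p3_props[OF assms] by (elim conjE) assumption

lemma p3_face:
  assumes "planar3tree u v z V E F" "S \<in> F"
  shows "S \<subseteq> V" "card S = 3" "\<And>y y'. y\<in>S \<Longrightarrow> y'\<in>S \<Longrightarrow> y\<noteq>y' \<Longrightarrow> {y,y'} \<in> E"
  using bspec[OF p3_facesall[OF assms(1)] assms(2)] by blast+

lemma p3_cov:
  assumes "planar3tree u v z V E F"
  shows "\<forall>w\<in>V. \<exists>S\<in>F. w\<in>S"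
  using p3_props[OF assms] by (elim conjE) assumption

lemma p3_edges: "planar3tree u v z V E F \<Longrightarrow> \<forall>e\<in>E. e \<subseteq> V"
proof (induction rule: planar3tree.induct)
  case (base) then show ?case by auto
next
  case (step V E F a b c x)
  have "{a,b,c} \<subseteq> V" using p3_face(1)[OF step.hyps(1,2)] .
  then show ?case using step.IH by auto
qed

definition Inv where
  "Inv n d X Y u v z p1 p2 p3 V E F g cap \<longleftrightarrow>
     geo V E F (embf n g) \<and> (\<forall>w\<in>V. g w \<in> sparse_grid n d) \<and> (\<forall>w\<in>V-{u,v,z}. g w \<in> X \<times> Y)
     \<and> g u = p1 \<and> g v = p2 \<and> g z = p3 \<and> (\<forall>S\<in>F. capok X Y g cap S)"

lemma sum_step:
  fixes cap :: "'a set \<Rightarrow> nat"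
  assumes fin: "finite F" and SF: "S \<in> F" and FV: "\<forall>S'\<in>F. S' \<subseteq> V" and x: "x \<notin> V" and fS: "finite S"
  shows "(\<Sum>S'\<in>F. (cap(S := (\<Sum>y\<in>S. cap (insert x (S - {y}))) + 1)) S')
       = (\<Sum>S'\<in>F - {S} \<union> (\<lambda>y. insert x (S - {y})) ` S. cap S') + 1"
proof -
  let ?c0 = "cap(S := (\<Sum>y\<in>S. cap (insert x (S - {y}))) + 1)"
  have "(\<Sum>S'\<in>F. ?c0 S') = ?c0 S + (\<Sum>S'\<in>F - {S}. ?c0 S')"
    using sum.remove[OF fin SF] by blast
  also have "(\<Sum>S'\<in>F - {S}. ?c0 S') = (\<Sum>S'\<in>F - {S}. cap S')" by (intro sum.cong) auto
  finally have 1: "(\<Sum>S'\<in>F. ?c0 S') = (\<Sum>y\<in>S. cap (insert x (S - {y}))) + 1 + (\<Sum>S'\<in>F - {S}. cap S')" by simp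
  have SV: "S \<subseteq> V" using FV SF by blast
  have disj: "(F - {S}) \<inter> (\<lambda>y. insert x (S - {y})) ` S = {}" using FV x by blast
  have "(\<Sum>S'\<in>F - {S} \<union> (\<lambda>y. insert x (S - {y})) ` S. cap S')
      = (\<Sum>S'\<in>F - {S}. cap S') + (\<Sum>S'\<in>(\<lambda>y. insert x (S - {y})) ` S. cap S')"
    using fin fS disj by (intro sum.union_disjoint) auto
  moreover have "inj_on (\<lambda>y. insert x (S - {y})) S"
  proof (rule inj_onI)
    fix y y' assume h: "y \<in> S" "y' \<in> S" "insert x (S - {y}) = insert x (S - {y'})"
    have "x \<notin> S" using SV x by blast
    then have "S - {y} = S - {y'}" using h(3) by (metis Diff_iff insert_Diff_if insert_absorb insert_ident singletonI)
    then show "y = y'" using h(1,2) by blast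
  qed
  then have "(\<Sum>S'\<in>(\<lambda>y. insert x (S - {y})) ` S. cap S') = (\<Sum>y\<in>S. cap (insert x (S - {y})))"
    by (simp add: sum.reindex)
  ultimately show ?thesis using 1 by simp
qed

lemma main_ind:
  fixes n :: nat and d :: int and X Y :: "int set" and K :: nat and p1 p2 p3 :: "int \<times> int"
  assumes P: "planar3tree u v z V E F"
    and n: "n \<ge> 1" and finX: "finite X" and finY: "finite Y" and XY: "X \<times> Y \<subseteq> sparse_grid n d"
    and p: "p1 \<in> sparse_grid n d" "p2 \<in> sparse_grid n d" "p3 \<in> sparse_grid n d"
    and base: "\<exists>L R C. {L,R,C} = {u,v,z} \<and> distinct [L,R,C] \<and>
        goodt (\<lambda>w. if w = u then p1 else if w = v then p2 else p3) L R C \<and>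
        K \<le> card (X \<inter> {fst ((\<lambda>w. if w = u then p1 else if w = v then p2 else p3) L)<..<fst ((\<lambda>w. if w = u then p1 else if w = v then p2 else p3) R)}) + 3 \<and>
        K \<le> card (Y \<inter> {max (snd ((\<lambda>w. if w = u then p1 else if w = v then p2 else p3) L)) (snd ((\<lambda>w. if w = u then p1 else if w = v then p2 else p3) R))<..<snd ((\<lambda>w. if w = u then p1 else if w = v then p2 else p3) C)}) + 3"
  shows "\<forall>cap. (\<Sum>S\<in>F. cap S) + card V \<le> K \<longrightarrow> (\<exists>g. Inv n d X Y u v z p1 p2 p3 V E F g cap)"
  using P
proof (induction rule: planar3tree.induct)
  case base
  define g0 where "g0 = (\<lambda>w. if w = u then p1 else if w = v then p2 else p3)"
  show ?case
  proof (intro allI impI)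
    fix cap :: "'a set \<Rightarrow> nat"
    assume c: "(\<Sum>S\<in>{{u, v, z}}. cap S) + card {u, v, z} \<le> K"
    have c': "cap {u,v,z} + 3 \<le> K" using c base.hyps by simp
    have b9: "\<exists>L R C. {L,R,C} = {u,v,z} \<and> distinct [L,R,C] \<and> goodt g0 L R C \<and>
      K \<le> card (X \<inter> {fst (g0 L)<..<fst (g0 R)}) + 3 \<and>
      K \<le> card (Y \<inter> {max (snd (g0 L)) (snd (g0 R))<..<snd (g0 C)}) + 3"
      unfolding g0_def by (rule assms(9))
    obtain L R C where L: "{L,R,C} = {u,v,z}" "distinct [L,R,C]" "goodt g0 L R C"
      "K \<le> card (X \<inter> {fst (g0 L)<..<fst (g0 R)}) + 3"
      "K \<le> card (Y \<inter> {max (snd (g0 L)) (snd (g0 R))<..<snd (g0 C)}) + 3"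
      using b9 by (elim exE conjE) (rule that; assumption)
    have g0uvz: "g0 u = p1" "g0 v = p2" "g0 z = p3" unfolding g0_def using base.hyps by auto
    have gs: "\<forall>w\<in>{u,v,z}. g0 w \<in> sparse_grid n d" using p g0uvz by auto
    have LRC: "L \<in> {u,v,z}" "R \<in> {u,v,z}" "C \<in> {u,v,z}" using L(1) by blast+
    have "DD (embf n g0 L) (embf n g0 R) (embf n g0 C) > 0"
      using good_DD_g[OF n L(3)] gs LRC by blast
    then have D: "DD (embf n g0 u) (embf n g0 v) (embf n g0 z) \<noteq> 0"
      using DD_perm_set[OF base.hyps L(2) L(1)[symmetric], of "embf n g0"] by simp
    have geo: "geo {u,v,z} {{u,v},{v,z},{u,z}} {{u,v,z}} (embf n g0)" by (rule geo_base[OF base.hyps D])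
    have k1: "cap {u,v,z} \<le> card (X \<inter> {fst (g0 L)<..<fst (g0 R)})" using L(4) c' by linarith
    have k2: "cap {u,v,z} \<le> card (Y \<inter> {max (snd (g0 L)) (snd (g0 R))<..<snd (g0 C)})" using L(5) c' by linarith
    have cap: "capok X Y g0 cap {u,v,z}" unfolding capok_def
      by (rule exI[of _ L], rule exI[of _ R], rule exI[of _ C], intro conjI) (fact L(1)[symmetric] L(2) L(3) k1 k2)+
    have "Inv n d X Y u v z p1 p2 p3 {u,v,z} {{u,v},{v,z},{u,z}} {{u,v,z}} g0 cap"
      unfolding Inv_def using geo gs cap g0uvz by auto
    then show "\<exists>g. Inv n d X Y u v z p1 p2 p3 {u,v,z} {{u,v},{v,z},{u,z}} {{u,v,z}} g cap" by blast
  qed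
next
  case (step V E F a b c x)
  let ?S = "{a,b,c}"
  let ?NF = "(\<lambda>y. insert x (?S - {y})) ` ?S"
  have PV: "planar3tree u v z V E F" by (rule step.hyps(1))
  have SF: "?S \<in> F" by (rule step.hyps(2))
  have xV: "x \<notin> V" by (rule step.hyps(3))
  have finV: "finite V" using p3_props[OF PV] by (elim conjE) assumption
  have finF: "finite F" using p3_props[OF PV] by (elim conjE) assumption
  have uV: "u \<in> V" using p3_props[OF PV] by (elim conjE) assumption
  have vV: "v \<in> V" using p3_props[OF PV] by (elim conjE) assumption
  have zV: "z \<in> V" using p3_props[OF PV] by (elim conjE) assumption
  note uvzV = uV vV zV
  have FVall: "\<forall>S'\<in>F. S' \<subseteq> V \<and> card S' = 3 \<and> (\<forall>y\<in>S'. \<forall>y'\<in>S'. y \<noteq> y' \<longrightarrow> {y,y'} \<in> E)"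
    by (rule p3_facesall[OF PV])
  have FV: "\<forall>S'\<in>F. S' \<subseteq> V" using p3_face(1)[OF PV] by blast
  have cov: "\<forall>w\<in>V. \<exists>S\<in>F. w\<in>S" by (rule p3_cov[OF PV])
  have EV: "\<forall>e\<in>E. e \<subseteq> V" by (rule p3_edges[OF PV])
  have SV: "?S \<subseteq> V" using p3_face(1)[OF PV SF] .
  have dS: "distinct [a,b,c]" by (rule card3_distinct[OF p3_face(2)[OF PV SF]])
  have NFeq: "{{x,a,b},{x,b,c},{x,a,c}} = ?NF" by (rule newfaces_eq[OF dS])
  have NEeq: "{{x,a},{x,b},{x,c}} = (\<lambda>y. {x,y}) ` ?S" by (rule newedges_eq)
  show ?case
  proof (intro allI impI)
    fix cap :: "'a set \<Rightarrow> nat"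
    assume csum: "(\<Sum>S\<in>F - {?S} \<union> {{x, a, b}, {x, b, c}, {x, a, c}}. cap S) + card (insert x V) \<le> K"
    define cap0 where "cap0 = cap(?S := (\<Sum>y\<in>?S. cap (insert x (?S - {y}))) + 1)"
    have "(\<Sum>S'\<in>F. cap0 S') = (\<Sum>S'\<in>F - {?S} \<union> ?NF. cap S') + 1"
      unfolding cap0_def by (rule sum_step[OF finF SF FV xV]) simp
    moreover have "card (insert x V) = card V + 1" using finV xV by simp
    ultimately have "(\<Sum>S'\<in>F. cap0 S') + card V \<le> K" using csum NFeq by simp
    then obtain g where g: "Inv n d X Y u v z p1 p2 p3 V E F g cap0" using step.IH by blast
    have ggeo: "geo V E F (embf n g)" using g unfolding Inv_def by (elim conjE) assumption
    have gsp: "\<forall>w\<in>V. g w \<in> sparse_grid n d" using g unfolding Inv_def by (elim conjE) assumption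
    have gXY: "\<forall>w\<in>V-{u,v,z}. g w \<in> X \<times> Y" using g unfolding Inv_def by (elim conjE) assumption
    have gu: "g u = p1" using g unfolding Inv_def by (elim conjE) assumption
    have gv: "g v = p2" using g unfolding Inv_def by (elim conjE) assumption
    have gz: "g z = p3" using g unfolding Inv_def by (elim conjE) assumption
    note guvz = gu gv gz
    have gcap: "\<forall>S\<in>F. capok X Y g cap0 S" using g unfolding Inv_def by (elim conjE) assumption
    obtain L R C where LRC: "?S = {L,R,C}" "distinct [L,R,C]" "goodt g L R C"
      "cap0 ?S \<le> card (X \<inter> {fst (g L)<..<fst (g R)})"
      "cap0 ?S \<le> card (Y \<inter> {max (snd (g L)) (snd (g R))<..<snd (g C)})"
      using bspec[OF gcap SF] unfolding capok_def by (elim exE conjE) (rule that; assumption)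
    define c1 where "c1 = cap (insert x (?S - {C}))"
    define c2 where "c2 = cap (insert x (?S - {L}))"
    define c3 where "c3 = cap (insert x (?S - {R}))"
    have c0: "cap0 ?S = c1 + c2 + c3 + 1"
    proof -
      have "(\<Sum>y\<in>?S. cap (insert x (?S - {y}))) = (\<Sum>y\<in>{L,R,C}. cap (insert x (?S - {y})))"
        using LRC(1) by simp
      also have "\<dots> = c2 + c3 + c1" using LRC(2) unfolding c1_def c2_def c3_def by simp
      finally show ?thesis unfolding cap0_def by simp
    qed
    obtain i where i: "i \<in> X" "fst (g L) < i" "i < fst (g R)" "c3 \<le> card (X \<inter> {fst (g L)<..<i})"
        "c1 + c2 \<le> card (X \<inter> {i<..<fst (g R)})"
      using split_interval[OF finX, where lo="fst (g L)" and hi="fst (g R)" and s=c3 and t="c1+c2"] LRC(4) c0 by auto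
    obtain j where j: "j \<in> Y" "max (snd (g L)) (snd (g R)) < j" "j < snd (g C)"
        "c1 \<le> card (Y \<inter> {max (snd (g L)) (snd (g R))<..<j})" "c2 + c3 \<le> card (Y \<inter> {j<..<snd (g C)})"
      using split_interval[OF finY, where lo="max (snd (g L)) (snd (g R))" and hi="snd (g C)" and s=c1 and t="c2+c3"] LRC(5) c0 by auto
    define g' where "g' = g(x := (i,j))"
    have g'V: "\<forall>w\<in>V. g' w = g w" unfolding g'_def using xV by auto
    have g'x: "g' x = (i,j)" unfolding g'_def by simp
    have LRCV: "L \<in> V" "R \<in> V" "C \<in> V" using SV LRC(1) by blast+
    have xLRC: "x \<noteq> L" "x \<noteq> R" "x \<noteq> C" using LRCV xV by blast+
    have gL: "g' L = g L" "g' R = g R" "g' C = g C" using g'V LRCV by auto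
    have sp': "\<forall>w\<in>insert x V. g' w \<in> sparse_grid n d" using gsp g'V g'x i(1) j(1) XY by auto
    have spL: "g' L \<in> sparse_grid n d" "g' R \<in> sparse_grid n d" "g' C \<in> sparse_grid n d" "g' x \<in> sparse_grid n d"
      using sp' LRCV by auto
    have gd: "goodt g' L R C" using LRC(3) gL unfolding goodt_def by simp
    have gd1: "goodt g' x R C" "goodt g' L x C" "goodt g' L R x"
      using LRC(3) gL g'x i j unfolding goodt_def by auto
    have D0: "DD (embf n g' L) (embf n g' R) (embf n g' C) > 0" by (rule good_DD_g[OF n gd spL(1-3)])
    have D1: "DD (embf n g' x) (embf n g' R) (embf n g' C) > 0" by (rule good_DD_g[OF n gd1(1) spL(4) spL(2,3)])
    have D2: "DD (embf n g' L) (embf n g' x) (embf n g' C) > 0" by (rule good_DD_g[OF n gd1(2) spL(1) spL(4) spL(3)])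
    have D3: "DD (embf n g' L) (embf n g' R) (embf n g' x) > 0" by (rule good_DD_g[OF n gd1(3) spL(1,2) spL(4)])
    have XT: "embf n g' x \<in> T3 (embf n g' L) (embf n g' R) (embf n g' C)" by (rule T3_by_DD[OF D0 D1 D2 D3])
    have emb_eq: "\<forall>w\<in>V. embf n g' w = embf n g w" using g'V unfolding embf_def by simp
    have embL: "embf n g' L = embf n g L" "embf n g' R = embf n g R" "embf n g' C = embf n g C"
      using emb_eq LRCV by auto
    have geo': "geo (insert x V) (E \<union> (\<lambda>y. {x,y}) ` ?S) (F - {?S} \<union> ?NF) (embf n g')"
      using geo_step[OF ggeo EV FVall cov SF LRC(1) LRC(2) xV emb_eq] XT D0 embL by simp
    have capold: "capok X Y g' cap S1" if h: "S1 \<in> F - {?S}" for S1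
    proof (rule capok_cong[of X Y g cap0])
      show "capok X Y g cap0 S1" using gcap h by blast
      show "\<And>w. w \<in> S1 \<Longrightarrow> g' w = g w" using g'V FV h by blast
      show "cap S1 = cap0 S1" using h unfolding cap0_def by simp
    qed
    have capnew: "capok X Y g' cap N" if h: "N \<in> ?NF" for N
    proof -
      obtain y where y: "y \<in> ?S" "N = insert x (?S - {y})" using h by blast
      from y(1) LRC(1) consider "y = C" | "y = L" | "y = R" by blast
      then show ?thesis
      proof cases
        case 1
        have N: "N = {L,R,x}" using y(2) 1 LRC(1,2) by auto
        have cN: "cap N = c1" unfolding c1_def using y(2) 1 by simp
        show ?thesis unfolding capok_def
          by (rule exI[of _ L], rule exI[of _ R], rule exI[of _ x]) (use cN N LRC(2) xLRC gd1(3) gL g'x LRC(4) c0 j(4) in auto)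
      next
        case 2
        have N: "N = {x,R,C}" using y(2) 2 LRC(1,2) by auto
        have mx: "max (snd (g' x)) (snd (g' R)) = j" using g'x gL j(2) by simp
        have cN: "cap N = c2" unfolding c2_def using y(2) 2 by simp
        show ?thesis unfolding capok_def
          by (rule exI[of _ x], rule exI[of _ R], rule exI[of _ C]) (use cN N LRC(2) xLRC gd1(1) gL g'x mx i(5) j(5) in auto)
      next
        case 3
        have N: "N = {L,x,C}" using y(2) 3 LRC(1,2) by auto
        have mx: "max (snd (g' L)) (snd (g' x)) = j" using g'x gL j(2) by simp
        have cN: "cap N = c3" unfolding c3_def using y(2) 3 by simp
        show ?thesis unfolding capok_def
          by (rule exI[of _ L], rule exI[of _ x], rule exI[of _ C]) (use cN N LRC(2) xLRC gd1(2) gL g'x mx i(4) j(5) in auto)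
      qed
    qed
    have "Inv n d X Y u v z p1 p2 p3 (insert x V) (E \<union> {{x,a},{x,b},{x,c}})
        (F - {?S} \<union> {{x,a,b},{x,b,c},{x,a,c}}) g' cap"
      unfolding Inv_def NFeq NEeq
    proof (intro conjI)
      show "geo (insert x V) (E \<union> (\<lambda>y. {x,y}) ` ?S) (F - {?S} \<union> ?NF) (embf n g')" by (rule geo')
      show "\<forall>w\<in>insert x V. g' w \<in> sparse_grid n d" by (rule sp')
      show "\<forall>w\<in>insert x V - {u,v,z}. g' w \<in> X \<times> Y"
      proof
        fix w assume w: "w \<in> insert x V - {u,v,z}"
        show "g' w \<in> X \<times> Y"
        proof (cases "w = x")
          case True then show ?thesis using g'x i(1) j(1) by simp
        next
          case False
          then have "w \<in> V - {u,v,z}" using w by blast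
          then show ?thesis using gXY g'V by auto
        qed
      qed
      show "g' u = p1" "g' v = p2" "g' z = p3" using guvz g'V uvzV by auto
      show "\<forall>S\<in>F - {?S} \<union> ?NF. capok X Y g' cap S" using capold capnew by blast
    qed
    then show "\<exists>g. Inv n d X Y u v z p1 p2 p3 (insert x V) (E \<union> {{x,a},{x,b},{x,c}})
        (F - {?S} \<union> {{x,a,b},{x,b,c},{x,a,c}}) g cap" by blast
  qed
qed


lemma rect_sub:
  assumes sub: "open_rect a b c d \<subseteq> open_rect a' b' c' d'" and ab: "a < b" and cd: "c < d"
  shows "a' \<le> a \<and> b \<le> b' \<and> c' \<le> c \<and> d \<le> d'"
proof (intro conjI)
  show "a' \<le> a"
  proof (rule ccontr)
    assume h: "\<not> a' \<le> a"
    let ?p = "((a + min b a')/2, (c+d)/2)"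
    have "?p \<in> open_rect a b c d" unfolding open_rect_def using h ab cd by (auto simp: min_def)
    then have "?p \<in> open_rect a' b' c' d'" using sub by blast
    then show False unfolding open_rect_def using h by (auto simp: min_def split: if_splits)
  qed
  show "b \<le> b'"
  proof (rule ccontr)
    assume h: "\<not> b \<le> b'"
    let ?p = "((b + max a b')/2, (c+d)/2)"
    have "?p \<in> open_rect a b c d" unfolding open_rect_def using h ab cd by (auto simp: max_def)
    then have "?p \<in> open_rect a' b' c' d'" using sub by blast
    then show False unfolding open_rect_def using h by (auto simp: max_def split: if_splits)
  qed
  show "c' \<le> c"
  proof (rule ccontr)
    assume h: "\<not> c' \<le> c"
    let ?p = "((a+b)/2, (c + min d c')/2)"
    have "?p \<in> open_rect a b c d" unfolding open_rect_def using h ab cd by (auto simp: min_def)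
    then have "?p \<in> open_rect a' b' c' d'" using sub by blast
    then show False unfolding open_rect_def using h by (auto simp: min_def split: if_splits)
  qed
  show "d \<le> d'"
  proof (rule ccontr)
    assume h: "\<not> d \<le> d'"
    let ?p = "((a+b)/2, (d + max c d')/2)"
    have "?p \<in> open_rect a b c d" unfolding open_rect_def using h ab cd by (auto simp: max_def)
    then have "?p \<in> open_rect a' b' c' d'" using sub by blast
    then show False unfolding open_rect_def using h by (auto simp: max_def split: if_splits)
  qed
qed

lemma fin_mults: "finite {i::int. s dvd i \<and> x1 < real_of_int i \<and> real_of_int i < x2}"
proof (rule finite_subset)
  show "{i::int. s dvd i \<and> x1 < real_of_int i \<and> real_of_int i < x2} \<subseteq> {\<lfloor>x1\<rfloor>..\<lceil>x2\<rceil>}"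
    by (auto; linarith)
qed simp

lemma count_mults:
  fixes s :: int and t :: nat
  assumes s: "s > 0" and w: "real_of_int s * (real t + 1) \<le> x2 - x1"
  shows "t \<le> card {i::int. s dvd i \<and> x1 < real_of_int i \<and> real_of_int i < x2}"
proof -
  define k0 where "k0 = \<lfloor>x1 / real_of_int s\<rfloor>"
  define h where "h = (\<lambda>k::nat. s * (k0 + 1 + int k))"
  have sr: "real_of_int s > 0" using s by simp
  have k0a: "real_of_int k0 \<le> x1 / real_of_int s" "x1 / real_of_int s < real_of_int k0 + 1"
    unfolding k0_def by linarith+
  have k0b: "real_of_int s * real_of_int k0 \<le> x1" "x1 < real_of_int s * (real_of_int k0 + 1)"
    using k0a sr by (simp_all add: pos_le_divide_eq pos_divide_less_eq mult.commute)
  have inj: "inj_on h {0..<t}" unfolding h_def using s by (intro inj_onI) auto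
  have sub: "h ` {0..<t} \<subseteq> {i::int. s dvd i \<and> x1 < real_of_int i \<and> real_of_int i < x2}"
  proof
    fix i assume "i \<in> h ` {0..<t}"
    then obtain k where k: "k < t" "i = h k" by auto
    have ri: "real_of_int i = real_of_int s * (real_of_int k0 + 1) + real_of_int s * real k"
      unfolding k(2) h_def by (simp add: algebra_simps)
    have "0 \<le> real_of_int s * real k" using sr by simp
    hence lo: "x1 < real_of_int i" using ri k0b by linarith
    have "real_of_int s * real k \<le> real_of_int s * (real t - 1)" using k(1) sr
      by (intro mult_left_mono) auto
    hence "real_of_int i \<le> real_of_int s * real_of_int k0 + real_of_int s * (real t)"
      using ri by (simp add: algebra_simps)
    also have "\<dots> \<le> x1 + real_of_int s * real t" using k0b by linarith
    also have "\<dots> < x2" using w sr by (simp add: algebra_simps)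
    finally have hi: "real_of_int i < x2" .
    have "s dvd i" unfolding k(2) h_def by simp
    then show "i \<in> {i::int. s dvd i \<and> x1 < real_of_int i \<and> real_of_int i < x2}" using lo hi by simp
  qed
  have "card (h ` {0..<t}) = t" using card_image[OF inj] by simp
  then show ?thesis using card_mono[OF fin_mults sub] by simp
qed


lemma choose_exps:
  fixes W H m :: real and q :: nat
  assumes m: "m > 0" and W: "W > 2*m" and H: "H > m" and WH: "W * H > 8 * m^2 * 2^q"
  shows "\<exists>a b. a + b = q \<and> 2^a * m \<le> W \<and> 2^b * m \<le> H"
proof -
  define a where "a = (GREATEST a. a \<le> q \<and> 2^a * m \<le> W)"
  have ex: "0 \<le> q \<and> 2^0 * m \<le> W" using W m by simp
  have bound: "\<forall>y. y \<le> q \<and> 2^y * m \<le> W \<longrightarrow> y \<le> q" by simp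
  have a1: "a \<le> q \<and> 2^a * m \<le> W" unfolding a_def
    by (rule GreatestI_nat[where P="\<lambda>a. a \<le> q \<and> 2^a * m \<le> W" and k=0 and b=q]) (use ex in auto)
  have a2: "\<And>y. y \<le> q \<Longrightarrow> 2^y * m \<le> W \<Longrightarrow> y \<le> a" unfolding a_def
    by (rule Greatest_le_nat[where P="\<lambda>a. a \<le> q \<and> 2^a * m \<le> W" and b=q]) auto
  define b where "b = q - a"
  have ab: "a + b = q" using a1 b_def by simp
  have "2^b * m \<le> H"
  proof (cases "a = q")
    case True then show ?thesis using b_def H by simp
  next
    case False
    then have "a + 1 \<le> q" using a1 by simp
    then have "\<not> 2^(a+1) * m \<le> W" using a2[of "a+1"] by auto
    then have Wlt: "W < 2 * 2^a * m" by simp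
    have Hp: "H > 0" using H m by simp
    have e: "(2::real)^q = 2^a * 2^b" using ab by (metis power_add)
    have "8 * m^2 * (2^a * 2^b) < W * H" using WH e by simp
    also have "W * H < 2 * 2^a * m * H" using Wlt Hp by simp
    finally have "8 * m^2 * (2^a * 2^b) < 2 * 2^a * m * H" .
    then have "(2 * 2^a * m) * (4 * m * 2^b) < (2 * 2^a * m) * H"
      by (simp add: power2_eq_square algebra_simps)
    then have h4: "4 * m * 2^b < H" using m by (simp add: mult_less_cancel_left_pos)
    have "0 < m * (2::real)^b" using m by simp
    then show ?thesis using h4 by (simp add: algebra_simps)
  qed
  then show ?thesis using ab a1 by blast
qed

lemma base_lab:
  fixes g0 :: "'a \<Rightarrow> int\<times>int"
  assumes d: "distinct [a',b',c']" and S: "{a',b',c'} = {u,v,z}"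
    and top: "max (snd (g0 a')) (snd (g0 b')) < snd (g0 c')"
    and sub: "open_rect x1 x2 y1 y2 \<subseteq> box_top (g0 a') (g0 b') (g0 c')" and x12: "x1 < x2" and y12: "y1 < y2"
    and X: "X \<subseteq> {i. x1 < real_of_int i \<and> real_of_int i < x2}"
    and Y: "Y \<subseteq> {j. y1 < real_of_int j \<and> real_of_int j < y2}"
    and KX: "K \<le> card X + 3" and KY: "K \<le> card Y + 3"
  shows "\<exists>L R C. {L,R,C} = {u,v,z} \<and> distinct [L,R,C] \<and> goodt g0 L R C \<and>
        K \<le> card (X \<inter> {fst (g0 L)<..<fst (g0 R)}) + 3 \<and>
        K \<le> card (Y \<inter> {max (snd (g0 L)) (snd (g0 R))<..<snd (g0 C)}) + 3"
proof -
  have r: "real_of_int (min (fst (g0 a')) (fst (g0 b'))) \<le> x1" "x2 \<le> real_of_int (max (fst (g0 a')) (fst (g0 b')))"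
    "real_of_int (max (snd (g0 a')) (snd (g0 b'))) \<le> y1" "y2 \<le> real_of_int (snd (g0 c'))"
    using rect_sub[OF sub[unfolded box_top_def] x12 y12] by auto
  have Yeq: "Y \<inter> {max (snd (g0 a')) (snd (g0 b'))<..<snd (g0 c')} = Y"
  proof -
    have "\<And>j. j \<in> Y \<Longrightarrow> max (snd (g0 a')) (snd (g0 b')) < j \<and> j < snd (g0 c')"
    proof -
      fix j assume "j \<in> Y"
      then have "y1 < real_of_int j" "real_of_int j < y2" using Y by auto
      then have "real_of_int (max (snd (g0 a')) (snd (g0 b'))) < real_of_int j" "real_of_int j < real_of_int (snd (g0 c'))"
        using r by linarith+
      then show "max (snd (g0 a')) (snd (g0 b')) < j \<and> j < snd (g0 c')" by linarith
    qed
    then show ?thesis by auto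
  qed
  have Xin: "\<And>i. i \<in> X \<Longrightarrow> min (fst (g0 a')) (fst (g0 b')) < i \<and> i < max (fst (g0 a')) (fst (g0 b'))"
  proof -
    fix i assume "i \<in> X"
    then have "x1 < real_of_int i" "real_of_int i < x2" using X by auto
    then have "real_of_int (min (fst (g0 a')) (fst (g0 b'))) < real_of_int i" "real_of_int i < real_of_int (max (fst (g0 a')) (fst (g0 b')))"
      using r by linarith+
    then show "min (fst (g0 a')) (fst (g0 b')) < i \<and> i < max (fst (g0 a')) (fst (g0 b'))" by linarith
  qed
  have ne: "fst (g0 a') \<noteq> fst (g0 b')" using r x12 by auto
  show ?thesis
  proof (cases "fst (g0 a') < fst (g0 b')")
    case True
    have Xeq: "X \<inter> {fst (g0 a')<..<fst (g0 b')} = X" using Xin True by auto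
    show ?thesis
      by (rule exI[of _ a'], rule exI[of _ b'], rule exI[of _ c'])
        (use S d True top Xeq Yeq KX KY in \<open>auto simp: goodt_def\<close>)
  next
    case False
    then have F: "fst (g0 b') < fst (g0 a')" using ne by simp
    have Xeq: "X \<inter> {fst (g0 b')<..<fst (g0 a')} = X" using Xin F by auto
    have Yeq': "Y \<inter> {max (snd (g0 b')) (snd (g0 a'))<..<snd (g0 c')} = Y" using Yeq by (simp add: max.commute)
    have S': "{b',a',c'} = {u,v,z}" using S by (simp add: insert_commute)
    show ?thesis
      by (rule exI[of _ b'], rule exI[of _ a'], rule exI[of _ c'])
        (use S' d F top Xeq Yeq' KX KY in \<open>auto simp: goodt_def\<close>)
  qed
qed


lemma box_bounds:
  assumes "p \<in> gridA n" "q \<in> gridA n" "r \<in> gridA n" "(x,y) \<in> box_top p q r"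
  shows "0 \<le> x \<and> x \<le> 14 * real n \<and> 0 \<le> y \<and> y \<le> 14 * real n"
proof -
  have b: "0 \<le> fst p" "fst p \<le> 14 * int n" "0 \<le> fst q" "fst q \<le> 14 * int n"
     "0 \<le> snd p" "0 \<le> snd q" "snd r \<le> 14 * int n"
    using assms(1-3) unfolding gridA_def by auto
  have "real_of_int (min (fst p) (fst q)) < x" "x < real_of_int (max (fst p) (fst q))"
    "real_of_int (max (snd p) (snd q)) < y" "y < real_of_int (snd r)"
    using assms(4) unfolding box_top_def open_rect_def by auto
  then show ?thesis using b by (simp add: min_def max_def split: if_splits; linarith)
qed

theorem lemma9:
  fixes \<alpha> :: real and n q :: nat and u v z :: 'a
    and V :: "'a set" and E F :: "'a set set"
    and p1 p2 p3 :: "int \<times> int" and x1 x2 y1 y2 :: real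
  assumes "0 < \<alpha>" "\<alpha> \<le> 1"
    and "0 < q" "real n powr \<alpha> = 2 ^ q"
    and "planar3tree u v z V E F"
    and "p1 \<in> sparse_grid n (2 ^ q)" "p2 \<in> sparse_grid n (2 ^ q)" "p3 \<in> sparse_grid n (2 ^ q)"
    and "max (snd p1) (snd p2) < snd p3 \<or> max (snd p1) (snd p3) < snd p2
         \<or> max (snd p2) (snd p3) < snd p1"
    and "open_rect x1 x2 y1 y2 \<subseteq> Box p1 p2 p3"
    and "(x2 - x1) * (y2 - y1) > 8 * real (card V) ^ 2 * 2 ^ q"
    and "x2 - x1 > 2 * real (card V)" and "y2 - y1 > real (card V)"
  shows "\<exists>f :: 'a \<Rightarrow> real \<times> real. straight_line_embedding V E f
     \<and> f u = tau n (rpt p1) \<and> f v = tau n (rpt p2) \<and> f z = tau n (rpt p3)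
     \<and> (\<forall>x \<in> V - {u, v, z}. \<exists>p \<in> sparse_grid n (2 ^ q).
            rpt p \<in> open_rect x1 x2 y1 y2 \<and> f x = tau n (rpt p))"
proof -
  note P = assms(5)
  have finV: "finite V" using p3_props[OF P] by (elim conjE) assumption
  have duvz: "distinct [u,v,z]" using p3_props[OF P] by (elim conjE) assumption
  have uV: "u \<in> V" using p3_props[OF P] by (elim conjE) assumption
  have vV: "v \<in> V" using p3_props[OF P] by (elim conjE) assumption
  have zV: "z \<in> V" using p3_props[OF P] by (elim conjE) assumption
  have c3: "card V \<ge> 3"
  proof -
    have "card {u,v,z} = 3" using duvz by simp
    moreover have "card {u,v,z} \<le> card V" using finV uV vV zV by (intro card_mono) auto
    ultimately show ?thesis by simp
  qed
  define m where "m = real (card V)"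
  have m0: "m > 0" using c3 unfolding m_def by simp
  have n1: "n \<ge> 1"
  proof (rule ccontr)
    assume "\<not> n \<ge> 1"
    then have "n = 0" by simp
    then have "real n powr \<alpha> = 0" by simp
    then show False using assms(4) by simp
  qed
  obtain a b where ab: "a + b = q" "2^a * m \<le> x2 - x1" "2^b * m \<le> y2 - y1"
    using choose_exps[OF m0, of "x2 - x1" "y2 - y1" q] assms(11-13) unfolding m_def by auto
  define X where "X = {i::int. 2^a dvd i \<and> x1 < real_of_int i \<and> real_of_int i < x2}"
  define Y where "Y = {j::int. 2^b dvd j \<and> y1 < real_of_int j \<and> real_of_int j < y2}"
  have finX: "finite X" unfolding X_def by (rule fin_mults)
  have finY: "finite Y" unfolding Y_def by (rule fin_mults)
  have t1: "real (card V - 3) + 1 \<le> m" using c3 unfolding m_def by simp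
  have cX: "card V - 3 \<le> card X" unfolding X_def
  proof (rule count_mults)
    show "(0::int) < 2^a" by simp
    have "real_of_int ((2::int)^a) * (real (card V - 3) + 1) \<le> 2^a * m"
      using t1 by simp
    then show "real_of_int ((2::int)^a) * (real (card V - 3) + 1) \<le> x2 - x1" using ab(2) by linarith
  qed
  have cY: "card V - 3 \<le> card Y" unfolding Y_def
  proof (rule count_mults)
    show "(0::int) < 2^b" by simp
    have "real_of_int ((2::int)^b) * (real (card V - 3) + 1) \<le> 2^b * m"
      using t1 by simp
    then show "real_of_int ((2::int)^b) * (real (card V - 3) + 1) \<le> y2 - y1" using ab(3) by linarith
  qed
  have pA: "p1 \<in> gridA n" "p2 \<in> gridA n" "p3 \<in> gridA n" using assms(6-8) unfolding sparse_grid_def by auto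
  have boxb: "\<And>x y. (x,y) \<in> Box p1 p2 p3 \<Longrightarrow> 0 \<le> x \<and> x \<le> 14 * real n \<and> 0 \<le> y \<and> y \<le> 14 * real n"
    unfolding Box_def using box_bounds pA by (auto split: if_splits)
  have XY: "X \<times> Y \<subseteq> sparse_grid n (2^q)"
  proof
    fix p assume "p \<in> X \<times> Y"
    then obtain i j where p: "p = (i,j)" "i \<in> X" "j \<in> Y" by auto
    have "(real_of_int i, real_of_int j) \<in> open_rect x1 x2 y1 y2"
      using p unfolding X_def Y_def open_rect_def by auto
    then have "(real_of_int i, real_of_int j) \<in> Box p1 p2 p3" using assms(10) by blast
    from boxb[OF this] have "0 \<le> i" "i \<le> 14 * int n" "0 \<le> j" "j \<le> 14 * int n" by linarith+
    then have gA: "(i,j) \<in> gridA n" unfolding gridA_def by simp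
    have "2^a * 2^b dvd i * j" using p unfolding X_def Y_def by (simp add: mult_dvd_mono)
    then have "(2::int)^q dvd i * j" using ab(1) by (metis power_add)
    then show "p \<in> sparse_grid n (2^q)" using gA p(1) unfolding sparse_grid_def by auto
  qed
  define g0 where "g0 = (\<lambda>w. if w = u then p1 else if w = v then p2 else p3)"
  have g0: "g0 u = p1" "g0 v = p2" "g0 z = p3" unfolding g0_def using duvz by auto
  have x12: "x1 < x2" and y12: "y1 < y2" using assms(12,13) by auto
  have Xs: "X \<subseteq> {i. x1 < real_of_int i \<and> real_of_int i < x2}" unfolding X_def by auto
  have Ys: "Y \<subseteq> {j. y1 < real_of_int j \<and> real_of_int j < y2}" unfolding Y_def by auto
  have KX: "card V \<le> card X + 3" and KY: "card V \<le> card Y + 3" using cX cY by auto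
  have base: "\<exists>L R C. {L,R,C} = {u,v,z} \<and> distinct [L,R,C] \<and> goodt g0 L R C \<and>
        card V \<le> card (X \<inter> {fst (g0 L)<..<fst (g0 R)}) + 3 \<and>
        card V \<le> card (Y \<inter> {max (snd (g0 L)) (snd (g0 R))<..<snd (g0 C)}) + 3"
  proof (cases "max (snd p1) (snd p2) < snd p3")
    case True
    have "Box p1 p2 p3 = box_top (g0 u) (g0 v) (g0 z)" unfolding Box_def g0 if_P[OF True] ..
    then show ?thesis using base_lab[of u v z u v z g0 x1 x2 y1 y2 X Y "card V"] duvz True g0 assms(10)
      x12 y12 Xs Ys KX KY by simp
  next
    case F1: False
    show ?thesis
    proof (cases "max (snd p1) (snd p3) < snd p2")
      case True
      have "Box p1 p2 p3 = box_top (g0 u) (g0 z) (g0 v)" unfolding Box_def g0 if_not_P[OF F1] if_P[OF True] ..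
      moreover have "distinct [u,z,v]" "{u,z,v} = {u,v,z}" using duvz by (auto simp: insert_commute)
      ultimately show ?thesis using base_lab[of u z v u v z g0 x1 x2 y1 y2 X Y "card V"] True g0 assms(10)
        x12 y12 Xs Ys KX KY by simp
    next
      case False
      then have T: "max (snd p2) (snd p3) < snd p1" using F1 assms(9) unfolding max_less_iff_conj by blast
      have "Box p1 p2 p3 = box_top (g0 v) (g0 z) (g0 u)" unfolding Box_def g0 if_not_P[OF F1] if_not_P[OF False] ..
      moreover have "distinct [v,z,u]" "{v,z,u} = {u,v,z}" using duvz by (auto simp: insert_commute)
      ultimately show ?thesis using base_lab[of v z u u v z g0 x1 x2 y1 y2 X Y "card V"] T g0 assms(10)
        x12 y12 Xs Ys KX KY by simp
    qed
  qed
  have MI: "\<forall>cap. (\<Sum>S\<in>F. cap S) + card V \<le> card V \<longrightarrow> (\<exists>g. Inv n (2^q) X Y u v z p1 p2 p3 V E F g cap)"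
    by (rule main_ind[OF P n1 finX finY XY assms(6-8) base[unfolded g0_def]])
  then obtain g where g: "Inv n (2^q) X Y u v z p1 p2 p3 V E F g (\<lambda>_. 0)" by fastforce
  have ggeo: "geo V E F (embf n g)" using g unfolding Inv_def by (elim conjE) assumption
  have gXY: "\<forall>w\<in>V-{u,v,z}. g w \<in> X \<times> Y" using g unfolding Inv_def by (elim conjE) assumption
  have gu: "g u = p1" using g unfolding Inv_def by (elim conjE) assumption
  have gv: "g v = p2" using g unfolding Inv_def by (elim conjE) assumption
  have gz: "g z = p3" using g unfolding Inv_def by (elim conjE) assumption
  have sle: "straight_line_embedding V E (embf n g)"
    using ggeo unfolding geo_def straight_line_embedding_def by (elim conjE) (intro conjI)
  have inner: "\<forall>x \<in> V - {u, v, z}. \<exists>p \<in> sparse_grid n (2 ^ q).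
            rpt p \<in> open_rect x1 x2 y1 y2 \<and> embf n g x = tau n (rpt p)"
  proof
    fix w assume w: "w \<in> V - {u,v,z}"
    have gw: "g w \<in> X \<times> Y" using bspec[OF gXY w] .
    have "g w \<in> sparse_grid n (2^q)" using subsetD[OF XY gw] .
    moreover have "rpt (g w) \<in> open_rect x1 x2 y1 y2"
      using gw unfolding X_def Y_def rpt_def open_rect_def by (cases "g w") auto
    ultimately show "\<exists>p \<in> sparse_grid n (2 ^ q). rpt p \<in> open_rect x1 x2 y1 y2 \<and> embf n g w = tau n (rpt p)"
      unfolding embf_def by blast
  qed
  show ?thesis
    by (rule exI[of _ "embf n g"]) (use sle inner gu gv gz in \<open>simp add: embf_def\<close>)
qed


end
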